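(* Let $S_4$ be the symmetric group of degree 4. The following d-identities form a basis of d-identities of $S_4$ (i.e. they all hold in $S_4$, and every group satisfying all of them is isomorphic to a section of $S_4$): (1) $\omega_{24}=\bigvee_{0\le i<j\le 24}(x_i=x_j)$; (2) $(x_1^4=1)\vee(x_2^4=1)\vee((x_1x_2)^4=1)\vee((x_1x_2^2)^4=1)$; (3) $(x^3=1)\vee(x^4=1)$; (4) $(x_1^6=1)\vee(x_2^6=1)\vee(x_1=x_2)\vee(x_1x_2=1)\vee((x_1x_2)^3=1)$; (5) $(x_1^3=1)\vee(x_2^3=1)\vee(x_3^3=1)\vee((x_1^{-1}x_2)^3=1)\vee((x_1^{-1}x_3)^3=1)\vee((x_2^{-1}x_3)^3=1)\vee\theta(x_1,x_2,x_3)$.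
   Context: A d-identity (disjunctive identity) is a universally quantified formula $\forall x_1\dots x_k\,[(f_1=1)\vee\dots\vee(f_n=1)]$ with the $f_i$ words in the free group on the variables; $u=v$ abbreviates $uv^{-1}=1$. A group satisfies it if it is true for all assignments. For a group $G$, $\mathrm{dvar}(G)$ is the class of groups satisfying every d-identity satisfied by $G$; for finite $G$ it is the class of groups isomorphic to sections (quotients of subgroups) of $G$. A set of d-identities is a basis of d-identities of $G$ if all its members hold in $G$ and every group satisfying them lies in $\mathrm{dvar}(G)$. Notation: "$u\in\langle v\rangle$" abbreviates $(u=1)\vee(u=v)\vee(u=v^2)\vee(u=v^3)$, and $\theta(z_1,z_2,z_3)$ denotes $\Big[\bigvee_{i\ne j} z_i\in\langle z_j\rangle\Big]\vee\Big[\bigvee_{\sigma\in S_3} z_{\sigma(1)}\in\langle z_{\sigma(2)}z_{\sigma(3)}\rangle\Big]\vee\Big[\bigvee_{\sigma\in S_3} z_{\sigma(1)}z_{\sigma(2)}\in\langle z_{\sigma(2)}z_{\sigma(3)}\rangle\Big]$ with $i,j\in\{1,2,3\}$. *)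

theory Defs
  imports "HOL-Algebra.Sym_Groups"
begin

definition is_section_of :: "('a, 'c) monoid_scheme \<Rightarrow> ('b, 'd) monoid_scheme \<Rightarrow> bool" where
  "is_section_of G K \<longleftrightarrow>
     (\<exists>H N. subgroup H K \<and> N \<lhd> (K\<lparr>carrier := H\<rparr>) \<and> G \<cong> ((K\<lparr>carrier := H\<rparr>) Mod N))"

text \<open>u in <v> abbreviates u = 1 or u = v or u = v^2 or u = v^3.\<close>
definition in_cyc :: "('a, 'c) monoid_scheme \<Rightarrow> 'a \<Rightarrow> 'a \<Rightarrow> bool" where
  "in_cyc G u v \<longleftrightarrow> u = \<one>\<^bsub>G\<^esub> \<or> u = v \<or> u = v [^]\<^bsub>G\<^esub> (2::nat) \<or> u = v [^]\<^bsub>G\<^esub> (3::nat)"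

definition theta :: "('a, 'c) monoid_scheme \<Rightarrow> 'a \<Rightarrow> 'a \<Rightarrow> 'a \<Rightarrow> bool" where
  "theta G z1 z2 z3 \<longleftrightarrow>
     (let z = (\<lambda>i::nat. if i = 1 then z1 else if i = 2 then z2 else z3);
          I = {1,2,3::nat};
          perms = {(a,b,c). a \<in> I \<and> b \<in> I \<and> c \<in> I \<and> a \<noteq> b \<and> a \<noteq> c \<and> b \<noteq> c}
      in (\<exists>i\<in>I. \<exists>j\<in>I. i \<noteq> j \<and> in_cyc G (z i) (z j))
       \<or> (\<exists>(a,b,c)\<in>perms. in_cyc G (z a) (z b \<otimes>\<^bsub>G\<^esub> z c))
       \<or> (\<exists>(a,b,c)\<in>perms. in_cyc G (z a \<otimes>\<^bsub>G\<^esub> z b) (z b \<otimes>\<^bsub>G\<^esub> z c)))"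

definition did1 :: "('a, 'c) monoid_scheme \<Rightarrow> bool" where
  "did1 G \<longleftrightarrow> (\<forall>x :: nat \<Rightarrow> 'a. (\<forall>i\<le>24. x i \<in> carrier G) \<longrightarrow>
                 (\<exists>i j. i < j \<and> j \<le> 24 \<and> x i = x j))"

definition did2 :: "('a, 'c) monoid_scheme \<Rightarrow> bool" where
  "did2 G \<longleftrightarrow> (\<forall>x1\<in>carrier G. \<forall>x2\<in>carrier G.
      x1 [^]\<^bsub>G\<^esub> (4::nat) = \<one>\<^bsub>G\<^esub> \<or> x2 [^]\<^bsub>G\<^esub> (4::nat) = \<one>\<^bsub>G\<^esub>
    \<or> (x1 \<otimes>\<^bsub>G\<^esub> x2) [^]\<^bsub>G\<^esub> (4::nat) = \<one>\<^bsub>G\<^esub>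
    \<or> (x1 \<otimes>\<^bsub>G\<^esub> x2 [^]\<^bsub>G\<^esub> (2::nat)) [^]\<^bsub>G\<^esub> (4::nat) = \<one>\<^bsub>G\<^esub>)"

definition did3 :: "('a, 'c) monoid_scheme \<Rightarrow> bool" where
  "did3 G \<longleftrightarrow> (\<forall>x\<in>carrier G. x [^]\<^bsub>G\<^esub> (3::nat) = \<one>\<^bsub>G\<^esub> \<or> x [^]\<^bsub>G\<^esub> (4::nat) = \<one>\<^bsub>G\<^esub>)"

definition did4 :: "('a, 'c) monoid_scheme \<Rightarrow> bool" where
  "did4 G \<longleftrightarrow> (\<forall>x1\<in>carrier G. \<forall>x2\<in>carrier G.
      x1 [^]\<^bsub>G\<^esub> (6::nat) = \<one>\<^bsub>G\<^esub> \<or> x2 [^]\<^bsub>G\<^esub> (6::nat) = \<one>\<^bsub>G\<^esub>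
    \<or> x1 = x2 \<or> x1 \<otimes>\<^bsub>G\<^esub> x2 = \<one>\<^bsub>G\<^esub>
    \<or> (x1 \<otimes>\<^bsub>G\<^esub> x2) [^]\<^bsub>G\<^esub> (3::nat) = \<one>\<^bsub>G\<^esub>)"

definition did5 :: "('a, 'c) monoid_scheme \<Rightarrow> bool" where
  "did5 G \<longleftrightarrow> (\<forall>x1\<in>carrier G. \<forall>x2\<in>carrier G. \<forall>x3\<in>carrier G.
      x1 [^]\<^bsub>G\<^esub> (3::nat) = \<one>\<^bsub>G\<^esub> \<or> x2 [^]\<^bsub>G\<^esub> (3::nat) = \<one>\<^bsub>G\<^esub>
    \<or> x3 [^]\<^bsub>G\<^esub> (3::nat) = \<one>\<^bsub>G\<^esub>
    \<or> (inv\<^bsub>G\<^esub> x1 \<otimes>\<^bsub>G\<^esub> x2) [^]\<^bsub>G\<^esub> (3::nat) = \<one>\<^bsub>G\<^esub>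
    \<or> (inv\<^bsub>G\<^esub> x1 \<otimes>\<^bsub>G\<^esub> x3) [^]\<^bsub>G\<^esub> (3::nat) = \<one>\<^bsub>G\<^esub>
    \<or> (inv\<^bsub>G\<^esub> x2 \<otimes>\<^bsub>G\<^esub> x3) [^]\<^bsub>G\<^esub> (3::nat) = \<one>\<^bsub>G\<^esub>
    \<or> theta G x1 x2 x3)"

definition S4_dbasis :: "('a, 'c) monoid_scheme \<Rightarrow> bool" where
  "S4_dbasis G \<longleftrightarrow> did1 G \<and> did2 G \<and> did3 G \<and> did4 G \<and> did5 G"

end

theory Submission
  imports Defs "HOL-Algebra.Multiplicative_Group" "HOL-Algebra.Group_Action" "HOL-Algebra.Sylow"
    "HOL-Computational_Algebra.Primes"
begin

definition fl :: "nat list \<Rightarrow> nat \<Rightarrow> nat" where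
  "fl l i = (if i \<in> {1..4} then l ! (i - 1) else i)"
definition vl :: "nat list \<Rightarrow> bool" where
  "vl l \<longleftrightarrow> length l = 4 \<and> set l \<subseteq> {1..4}"
definition e4 :: "nat list" where "e4 = [1,2,3,4]"
definition cmp :: "nat list \<Rightarrow> nat list \<Rightarrow> nat list" where "cmp l m = map (\<lambda>j. l ! (j - 1)) m"
fun lp :: "nat list \<Rightarrow> nat \<Rightarrow> nat list" where
  "lp l 0 = e4" | "lp l (Suc n) = cmp (lp l n) l"
definition linv :: "nat list \<Rightarrow> nat list" where
  "linv l = map (\<lambda>i. Suc (length (takeWhile (\<lambda>x. x \<noteq> i) l))) [1,2,3,4]"
definition L4 :: "nat list list" where "L4 = [[1,2,3,4],[1,2,4,3],[1,3,2,4],[1,3,4,2],[1,4,2,3],[1,4,3,2],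
 [2,1,3,4],[2,1,4,3],[2,3,1,4],[2,3,4,1],[2,4,1,3],[2,4,3,1],
 [3,1,2,4],[3,1,4,2],[3,2,1,4],[3,2,4,1],[3,4,1,2],[3,4,2,1],
 [4,1,2,3],[4,1,3,2],[4,2,1,3],[4,2,3,1],[4,3,1,2],[4,3,2,1]]"

lemma len4: "length l = 4 \<Longrightarrow> l = [l!0, l!1, l!2, l!3]"
  by (cases l; cases "tl l"; cases "tl (tl l)"; cases "tl (tl (tl l))"; cases "tl (tl (tl (tl l)))") auto

lemma fl_inj: assumes "length l = 4" "length m = 4" "fl l = fl m" shows "l = m"
proof -
  have "\<forall>i\<in>{1,2,3,4}. fl l i = fl m i" using assms(3) by simp
  hence "l!0 = m!0 \<and> l!1 = m!1 \<and> l!2 = m!2 \<and> l!3 = m!3" by (simp add: fl_def)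
  thus ?thesis using len4[OF assms(1)] len4[OF assms(2)] by metis
qed

lemma fl_e4: "fl e4 = id"
proof
  fix i show "fl e4 i = id i"
    by (cases "i = 1 \<or> i = 2 \<or> i = 3 \<or> i = 4") (auto simp: fl_def e4_def)
qed

lemma vl_e4: "vl e4" by (simp add: vl_def e4_def)

lemma vl_cmp: assumes "vl l" "vl m" shows "vl (cmp l m)"
proof -
  have "l ! (j - 1) \<in> {1..4}" if "j \<in> set m" for j
  proof -
    have "j \<in> {1..4}" using that assms by (auto simp: vl_def)
    then have "j - 1 < length l" using assms by (auto simp: vl_def)
    then have "l ! (j - 1) \<in> set l" by (rule nth_mem)
    then show ?thesis using assms by (auto simp: vl_def)
  qed
  then show ?thesis using assms by (auto simp: vl_def cmp_def)
qed

lemma vl_lp: "vl l \<Longrightarrow> vl (lp l n)"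
  by (induct n) (auto simp: vl_e4 vl_cmp)

lemma fl_cmp: assumes "vl l" "vl m" shows "fl l \<circ> fl m = fl (cmp l m)"
proof
  fix i
  show "(fl l \<circ> fl m) i = fl (cmp l m) i"
  proof (cases "i \<in> {1..4}")
    case True
    then have "i - 1 < length m" using assms by (auto simp: vl_def)
    then have "m ! (i-1) \<in> set m" by (rule nth_mem)
    then have "m ! (i-1) \<in> {1..4}" using assms by (auto simp: vl_def)
    then show ?thesis using True \<open>i - 1 < length m\<close> by (simp add: fl_def cmp_def)
  next
    case False
    have "fl m i = i" "fl l i = i" "fl (cmp l m) i = i" by (simp_all only: fl_def if_not_P[OF False])
    then show ?thesis by simp
  qed
qed

lemma L4_props0: "\<forall>l\<in>set L4. length l = 4 \<and> distinct l \<and> set l \<subseteq> {1..4} \<and> 1 \<in> set l \<and> 2 \<in> set l \<and> 3 \<in> set l \<and> 4 \<in> set l \<and> linv l \<in> set L4 \<and> cmp (linv l) l = e4"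
  by (simp add: L4_def linv_def cmp_def e4_def)

lemma L4_props: "\<forall>l\<in>set L4. length l = 4 \<and> distinct l \<and> set l = {1..4} \<and> linv l \<in> set L4 \<and> cmp (linv l) l = e4"
proof
  fix l assume "l \<in> set L4"
  then have h: "length l = 4 \<and> distinct l \<and> set l \<subseteq> {1..4} \<and> 1 \<in> set l \<and> 2 \<in> set l \<and> 3 \<in> set l \<and> 4 \<in> set l \<and> linv l \<in> set L4 \<and> cmp (linv l) l = e4"
    using L4_props0 by blast
  have "{1..4} \<subseteq> set l"
  proof
    fix x :: nat assume "x \<in> {1..4}"
    then have "x = 1 \<or> x = 2 \<or> x = 3 \<or> x = 4" by auto
    then show "x \<in> set l" using h by auto
  qed
  then show "length l = 4 \<and> distinct l \<and> set l = {1..4} \<and> linv l \<in> set L4 \<and> cmp (linv l) l = e4"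
    using h by blast
qed

lemma vl_L4: "l \<in> set L4 \<Longrightarrow> vl l"
  using L4_props by (auto simp: vl_def)

lemma fl_perm: assumes "l \<in> set L4" shows "fl l permutes {1..4}"
proof -
  have d: "distinct l" "length l = 4" "set l = {1..4}" using L4_props assms by auto
  have b1: "bij_betw ((!) l) {..<4} {1..4}" using bij_betw_nth[OF d(1)] d by simp
  have b2: "bij_betw (\<lambda>i. i - 1) {1..(4::nat)} {..<4}"
    by (rule bij_betw_byWitness[where f'="\<lambda>i. i + 1"]) auto
  have "bij_betw ((!) l \<circ> (\<lambda>i. i - 1)) {1..4} {1..4}" using bij_betw_trans[OF b2 b1] .
  moreover have "\<And>i. i \<in> {1..4} \<Longrightarrow> ((!) l \<circ> (\<lambda>i. i - 1)) i = fl l i" by (simp add: fl_def)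
  ultimately have "bij_betw (fl l) {1..4} {1..4}" using bij_betw_cong by blast
  then show ?thesis by (rule bij_imp_permutes) (auto simp: fl_def)
qed

lemma carrier_S4: "carrier (sym_group 4) = fl ` set L4"
proof -
  have sub: "fl ` set L4 \<subseteq> carrier (sym_group 4)" using fl_perm by (auto simp: sym_group_carrier)
  have "inj_on fl (set L4)" using fl_inj L4_props by (meson inj_onI)
  then have c: "card (fl ` set L4) = 24" by (simp add: card_image L4_def)
  have c2: "card (carrier (sym_group 4)) = 24" by (simp add: sym_group_card_carrier fact_numeral)
  then have "finite (carrier (sym_group 4))" by (metis card.infinite zero_neq_numeral)
  then show ?thesis using card_subset_eq[OF _ sub] c c2 by simp
qed


lemma theta_expl: "theta G z1 z2 z3 \<longleftrightarrow>
  (in_cyc G z1 z2 \<or> in_cyc G z1 z3 \<or> in_cyc G z2 z1 \<or> in_cyc G z2 z3 \<or> in_cyc G z3 z1 \<or> in_cyc G z3 z2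
 \<or> in_cyc G z1 (z2 \<otimes>\<^bsub>G\<^esub> z3) \<or> in_cyc G z1 (z3 \<otimes>\<^bsub>G\<^esub> z2) \<or> in_cyc G z2 (z1 \<otimes>\<^bsub>G\<^esub> z3)
 \<or> in_cyc G z2 (z3 \<otimes>\<^bsub>G\<^esub> z1) \<or> in_cyc G z3 (z1 \<otimes>\<^bsub>G\<^esub> z2) \<or> in_cyc G z3 (z2 \<otimes>\<^bsub>G\<^esub> z1)
 \<or> in_cyc G (z1 \<otimes>\<^bsub>G\<^esub> z2) (z2 \<otimes>\<^bsub>G\<^esub> z3) \<or> in_cyc G (z1 \<otimes>\<^bsub>G\<^esub> z3) (z3 \<otimes>\<^bsub>G\<^esub> z2)
 \<or> in_cyc G (z2 \<otimes>\<^bsub>G\<^esub> z1) (z1 \<otimes>\<^bsub>G\<^esub> z3) \<or> in_cyc G (z2 \<otimes>\<^bsub>G\<^esub> z3) (z3 \<otimes>\<^bsub>G\<^esub> z1)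
 \<or> in_cyc G (z3 \<otimes>\<^bsub>G\<^esub> z1) (z1 \<otimes>\<^bsub>G\<^esub> z2) \<or> in_cyc G (z3 \<otimes>\<^bsub>G\<^esub> z2) (z2 \<otimes>\<^bsub>G\<^esub> z1))"
proof -
  have P: "{(a,b,c). a \<in> {1,2,3::nat} \<and> b \<in> {1,2,3} \<and> c \<in> {1,2,3} \<and> a \<noteq> b \<and> a \<noteq> c \<and> b \<noteq> c}
     = {(1,2,3),(1,3,2),(2,1,3),(2,3,1),(3,1,2),(3,2,1)}" by auto
  show ?thesis unfolding theta_def Let_def P by auto
qed

definition cy :: "nat list \<Rightarrow> nat list \<Rightarrow> bool" where
  "cy u v \<longleftrightarrow> u = e4 \<or> u = v \<or> u = lp v 2 \<or> u = lp v 3"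

definition th :: "nat list \<Rightarrow> nat list \<Rightarrow> nat list \<Rightarrow> bool" where
 "th z1 z2 z3 \<longleftrightarrow> (cy z1 z2 \<or> cy z1 z3 \<or> cy z2 z1 \<or> cy z2 z3 \<or> cy z3 z1 \<or> cy z3 z2
 \<or> cy z1 (cmp z2 z3) \<or> cy z1 (cmp z3 z2) \<or> cy z2 (cmp z1 z3)
 \<or> cy z2 (cmp z3 z1) \<or> cy z3 (cmp z1 z2) \<or> cy z3 (cmp z2 z1)
 \<or> cy (cmp z1 z2) (cmp z2 z3) \<or> cy (cmp z1 z3) (cmp z3 z2)
 \<or> cy (cmp z2 z1) (cmp z1 z3) \<or> cy (cmp z2 z3) (cmp z3 z1)
 \<or> cy (cmp z3 z1) (cmp z1 z2) \<or> cy (cmp z3 z2) (cmp z2 z1))"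

definition ok5 :: "nat list \<Rightarrow> nat list \<Rightarrow> nat list \<Rightarrow> bool" where
 "ok5 a b c \<longleftrightarrow> lp a 3 = e4 \<or> lp b 3 = e4 \<or> lp c 3 = e4 \<or> lp (cmp (linv a) b) 3 = e4
   \<or> lp (cmp (linv a) c) 3 = e4 \<or> lp (cmp (linv b) c) 3 = e4 \<or> th a b c"

lemma one_S4: "\<one>\<^bsub>sym_group 4\<^esub> = fl e4" by (simp add: sym_group_one fl_e4)
lemma mult_S4: "vl l \<Longrightarrow> vl m \<Longrightarrow> fl l \<otimes>\<^bsub>sym_group 4\<^esub> fl m = fl (cmp l m)"
  by (simp add: sym_group_mult fl_cmp)
lemma pow_S4: "vl l \<Longrightarrow> fl l [^]\<^bsub>sym_group 4\<^esub> (n::nat) = fl (lp l n)"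
  by (induct n) (simp_all add: one_S4 mult_S4 vl_lp)
lemma eq_fl: "vl l \<Longrightarrow> vl m \<Longrightarrow> fl l = fl m \<longleftrightarrow> l = m"
  using fl_inj by (auto simp: vl_def)
lemma inv_S4: assumes "l \<in> set L4" shows "inv\<^bsub>sym_group 4\<^esub> (fl l) = fl (linv l)"
proof -
  have "linv l \<in> set L4" "cmp (linv l) l = e4" using L4_props assms by auto
  then have "fl (linv l) \<otimes>\<^bsub>sym_group 4\<^esub> fl l = \<one>\<^bsub>sym_group 4\<^esub>"
    using assms by (simp add: mult_S4 vl_L4 one_S4)
  moreover have "fl l \<in> carrier (sym_group 4)" "fl (linv l) \<in> carrier (sym_group 4)"
    using assms \<open>linv l \<in> set L4\<close> by (auto simp: carrier_S4)
  ultimately show ?thesis using group.inv_equality[OF sym_group_is_group] by blast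
qed

lemma vl_linv: "l \<in> set L4 \<Longrightarrow> vl (linv l)" using L4_props vl_L4 by blast

lemmas S4_simps = one_S4 mult_S4 pow_S4 eq_fl inv_S4 vl_cmp vl_lp vl_L4 vl_e4 vl_linv

lemma chk3: "\<forall>a\<in>set L4. lp a 3 = e4 \<or> lp a 4 = e4" by code_simp
lemma chk2: "\<forall>a\<in>set L4. \<forall>b\<in>set L4. lp a 4 = e4 \<or> lp b 4 = e4 \<or> lp (cmp a b) 4 = e4 \<or> lp (cmp a (lp b 2)) 4 = e4"
  by code_simp
lemma chk4: "\<forall>a\<in>set L4. \<forall>b\<in>set L4. lp a 6 = e4 \<or> lp b 6 = e4 \<or> a = b \<or> cmp a b = e4 \<or> lp (cmp a b) 3 = e4"
  by code_simp



lemma did3_S4: "did3 (sym_group 4)"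
  unfolding did3_def carrier_S4
proof
  fix x assume "x \<in> fl ` set L4"
  then obtain a where a: "a \<in> set L4" "x = fl a" by blast
  have "lp a 3 = e4 \<or> lp a 4 = e4" using chk3 a by blast
  then show "x [^]\<^bsub>sym_group 4\<^esub> (3::nat) = \<one>\<^bsub>sym_group 4\<^esub> \<or> x [^]\<^bsub>sym_group 4\<^esub> (4::nat) = \<one>\<^bsub>sym_group 4\<^esub>"
    using a by (simp only: S4_simps)
qed

lemma did2_S4: "did2 (sym_group 4)"
  unfolding did2_def carrier_S4
proof (intro ballI)
  fix x y assume "x \<in> fl ` set L4" "y \<in> fl ` set L4"
  then obtain a b where a: "a \<in> set L4" "x = fl a" "b \<in> set L4" "y = fl b" by blast
  have "lp a 4 = e4 \<or> lp b 4 = e4 \<or> lp (cmp a b) 4 = e4 \<or> lp (cmp a (lp b 2)) 4 = e4" using chk2 a by blast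
  then show "x [^]\<^bsub>sym_group 4\<^esub> (4::nat) = \<one>\<^bsub>sym_group 4\<^esub> \<or> y [^]\<^bsub>sym_group 4\<^esub> (4::nat) = \<one>\<^bsub>sym_group 4\<^esub>
    \<or> (x \<otimes>\<^bsub>sym_group 4\<^esub> y) [^]\<^bsub>sym_group 4\<^esub> (4::nat) = \<one>\<^bsub>sym_group 4\<^esub>
    \<or> (x \<otimes>\<^bsub>sym_group 4\<^esub> y [^]\<^bsub>sym_group 4\<^esub> (2::nat)) [^]\<^bsub>sym_group 4\<^esub> (4::nat) = \<one>\<^bsub>sym_group 4\<^esub>"
    using a by (simp only: S4_simps)
qed

lemma did4_S4: "did4 (sym_group 4)"
  unfolding did4_def carrier_S4
proof (intro ballI)
  fix x y assume "x \<in> fl ` set L4" "y \<in> fl ` set L4"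
  then obtain a b where a: "a \<in> set L4" "x = fl a" "b \<in> set L4" "y = fl b" by blast
  have "lp a 6 = e4 \<or> lp b 6 = e4 \<or> a = b \<or> cmp a b = e4 \<or> lp (cmp a b) 3 = e4" using chk4 a by blast
  then show "x [^]\<^bsub>sym_group 4\<^esub> (6::nat) = \<one>\<^bsub>sym_group 4\<^esub> \<or> y [^]\<^bsub>sym_group 4\<^esub> (6::nat) = \<one>\<^bsub>sym_group 4\<^esub>
    \<or> x = y \<or> x \<otimes>\<^bsub>sym_group 4\<^esub> y = \<one>\<^bsub>sym_group 4\<^esub>
    \<or> (x \<otimes>\<^bsub>sym_group 4\<^esub> y) [^]\<^bsub>sym_group 4\<^esub> (3::nat) = \<one>\<^bsub>sym_group 4\<^esub>"
    using a by (simp only: S4_simps)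
qed

lemma chk5: "\<forall>a\<in>set L4. \<forall>b\<in>set L4. \<forall>c\<in>set L4. ok5 a b c" by code_simp

lemma did5_S4: "did5 (sym_group 4)"
  unfolding did5_def carrier_S4
proof (intro ballI)
  fix x y z assume "x \<in> fl ` set L4" "y \<in> fl ` set L4" "z \<in> fl ` set L4"
  then obtain a b c where a: "a \<in> set L4" "x = fl a" "b \<in> set L4" "y = fl b" "c \<in> set L4" "z = fl c" by blast
  have "ok5 a b c" using chk5 a by blast
  then show "x [^]\<^bsub>sym_group 4\<^esub> (3::nat) = \<one>\<^bsub>sym_group 4\<^esub> \<or>
        y [^]\<^bsub>sym_group 4\<^esub> (3::nat) = \<one>\<^bsub>sym_group 4\<^esub> \<or>
        z [^]\<^bsub>sym_group 4\<^esub> (3::nat) = \<one>\<^bsub>sym_group 4\<^esub> \<or>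
        (inv\<^bsub>sym_group 4\<^esub> x \<otimes>\<^bsub>sym_group 4\<^esub> y) [^]\<^bsub>sym_group 4\<^esub> (3::nat) = \<one>\<^bsub>sym_group 4\<^esub> \<or>
        (inv\<^bsub>sym_group 4\<^esub> x \<otimes>\<^bsub>sym_group 4\<^esub> z) [^]\<^bsub>sym_group 4\<^esub> (3::nat) = \<one>\<^bsub>sym_group 4\<^esub> \<or>
        (inv\<^bsub>sym_group 4\<^esub> y \<otimes>\<^bsub>sym_group 4\<^esub> z) [^]\<^bsub>sym_group 4\<^esub> (3::nat) = \<one>\<^bsub>sym_group 4\<^esub> \<or>
        theta (sym_group 4) x y z"
    using a unfolding ok5_def th_def cy_def theta_expl in_cyc_def by (simp only: S4_simps)
qed

lemma did1_S4: "did1 (sym_group 4)"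
  unfolding did1_def
proof (intro allI impI)
  fix x :: "nat \<Rightarrow> nat \<Rightarrow> nat" assume h: "\<forall>i\<le>24. x i \<in> carrier (sym_group 4)"
  show "\<exists>i j. i < j \<and> j \<le> 24 \<and> x i = x j"
  proof (rule ccontr)
    assume "\<not> ?thesis"
    then have "inj_on x {..24}" unfolding inj_on_def by (metis atMost_iff linorder_neqE_nat)
    then have c1: "card (x ` {..24}) = 25" by (simp add: card_image)
    have s: "x ` {..24} \<subseteq> carrier (sym_group 4)" using h by auto
    have c2: "card (carrier (sym_group 4)) = 24" by (simp add: sym_group_card_carrier fact_numeral)
    then have "finite (carrier (sym_group 4))" by (metis card.infinite zero_neq_numeral)
    then have "card (x ` {..24}) \<le> 24" using card_mono[OF _ s] c2 by simp
    then show False using c1 by simp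
  qed
qed

lemma S4_ok: "S4_dbasis (sym_group 4)"
  unfolding S4_dbasis_def using did1_S4 did2_S4 did3_S4 did4_S4 did5_S4 by blast


context group begin

lemma powk: "x \<in> carrier G \<Longrightarrow> x [^] k = \<one> \<Longrightarrow> x [^] (k*q + r) = x [^] (r::nat)"
  by (simp add: nat_pow_mult[symmetric] nat_pow_pow[symmetric])

lemma powk': "x \<in> carrier G \<Longrightarrow> x [^] k = \<one> \<Longrightarrow> n = k*q + r \<Longrightarrow> x [^] (n::nat) = x [^] (r::nat)"
  using powk by blast

lemma pow_gcd: "x \<in> carrier G \<Longrightarrow> x [^] (m::nat) = \<one> \<Longrightarrow> x [^] (n::nat) = \<one> \<Longrightarrow> x [^] gcd m n = \<one>"
  by (simp add: pow_eq_id)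

lemma pow_sub: assumes H: "subgroup H G" and x: "x \<in> H" shows "x [^] card H = \<one>"
proof -
  interpret K: group "G\<lparr>carrier := H\<rparr>" by (rule subgroup_imp_group[OF H])
  have "x [^]\<^bsub>G\<lparr>carrier := H\<rparr>\<^esub> order (G\<lparr>carrier := H\<rparr>) = \<one>\<^bsub>G\<lparr>carrier := H\<rparr>\<^esub>"
    using K.pow_order_eq_1 x by simp
  then show ?thesis using nat_pow_consistent by (simp add: order_def)
qed

lemma p1: "x \<in> carrier G \<Longrightarrow> x [^] (1::nat) = x" by simp
lemma p2: "x \<in> carrier G \<Longrightarrow> x [^] (2::nat) = x \<otimes> x" by (simp add: numeral_2_eq_2)
lemma p3: "x \<in> carrier G \<Longrightarrow> x [^] (3::nat) = x \<otimes> x \<otimes> x" by (simp add: numeral_3_eq_3)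

lemma comm_pow: assumes "x \<in> carrier G" "y \<in> carrier G" "x \<otimes> y = y \<otimes> x"
  shows "x \<otimes> y [^] (n::nat) = y [^] n \<otimes> x"
proof (induct n)
  case 0 then show ?case using assms by simp
next
  case (Suc n)
  have "x \<otimes> y [^] Suc n = (x \<otimes> y [^] n) \<otimes> y" using assms by (simp add: m_assoc)
  also have "\<dots> = y [^] n \<otimes> (x \<otimes> y)" using Suc assms by (simp add: m_assoc)
  also have "\<dots> = y [^] Suc n \<otimes> x" using assms by (simp add: m_assoc)
  finally show ?case .
qed

lemma inv_eq_of: "x \<in> carrier G \<Longrightarrow> y \<in> carrier G \<Longrightarrow> x \<otimes> y = \<one> \<Longrightarrow> y = inv x"
  by (metis inv_equality inv_comm)

lemma comm_of_invol: assumes "y \<in> carrier G" "z \<in> carrier G" "y \<otimes> y = \<one>" "z \<otimes> z = \<one>"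
  "(y \<otimes> z) \<otimes> (y \<otimes> z) = \<one>" shows "y \<otimes> z = z \<otimes> y"
proof -
  have "inv y = y" "inv z = z" "inv (y \<otimes> z) = y \<otimes> z" using assms inv_eq_of by (metis m_closed)+
  then show ?thesis using inv_mult_group assms by metis
qed

end

locale sg = group G for G (structure) +
  assumes D: "S4_dbasis G"
begin

lemma d3: "x \<in> carrier G \<Longrightarrow> x [^] (3::nat) = \<one> \<or> x [^] (4::nat) = \<one>"
  using D unfolding S4_dbasis_def did3_def by blast

lemma L6: assumes a: "a \<in> carrier G" "a [^] (3::nat) = \<one>" "a \<noteq> \<one>"
  and b: "b \<in> carrier G" "b \<otimes> b = \<one>" "b \<noteq> \<one>" and c: "a \<otimes> b = b \<otimes> a"
  shows False
proof -
  have b2: "b [^] (2::nat) = \<one>" using b p2 by simp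
  have "(a \<otimes> b) [^] (3::nat) = a [^] (3::nat) \<otimes> b [^] (3::nat)" using pow_mult_distrib a b c by blast
  also have "b [^] (3::nat) = b" using powk'[OF b(1) b2, of 3 1 1] b by simp
  finally have 3: "(a \<otimes> b) [^] (3::nat) \<noteq> \<one>" using a b by simp
  have "(a \<otimes> b) [^] (4::nat) = a [^] (4::nat) \<otimes> b [^] (4::nat)" using pow_mult_distrib a b c by blast
  also have "a [^] (4::nat) = a" using powk'[OF a(1) a(2), of 4 1 1] a by simp
  also have "b [^] (4::nat) = \<one>" using powk'[OF b(1) b2, of 4 2 0] b by simp
  finally have 4: "(a \<otimes> b) [^] (4::nat) \<noteq> \<one>" using a b by simp
  show False using d3[of "a \<otimes> b"] 3 4 a b by simp
qed

lemma L6': assumes a: "a \<in> carrier G" "a [^] (3::nat) = \<one>" "a \<noteq> \<one>"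
  and c: "c \<in> carrier G" "c [^] (4::nat) = \<one>" "c \<otimes> c \<noteq> \<one>" and cm: "a \<otimes> c = c \<otimes> a"
  shows False
proof -
  have "(c \<otimes> c) \<otimes> (c \<otimes> c) = c [^] (4::nat)" using c by (simp add: numeral_eq_Suc m_assoc)
  then have "(c \<otimes> c) \<otimes> (c \<otimes> c) = \<one>" using c by simp
  moreover have "a \<otimes> (c \<otimes> c) = (c \<otimes> c) \<otimes> a" using cm a c by (metis m_assoc)
  ultimately show False using L6[OF a, of "c \<otimes> c"] c by simp
qed

end

lemma pick: "finite A \<Longrightarrow> finite P \<Longrightarrow> card A < card P \<Longrightarrow> \<exists>x\<in>P. x \<notin> A"
  by (meson card_mono not_le subsetI)

lemma card3: "card {a, b, c} \<le> 3"
  by (simp add: card_insert_if)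

context group begin
lemma cancel1 [simp]: "x \<in> carrier G \<Longrightarrow> y \<in> carrier G \<Longrightarrow> inv x \<otimes> (x \<otimes> y) = y"
  by (simp add: m_assoc[symmetric])
lemma cancel2 [simp]: "x \<in> carrier G \<Longrightarrow> y \<in> carrier G \<Longrightarrow> x \<otimes> (inv x \<otimes> y) = y"
  by (simp add: m_assoc[symmetric])
lemma lcan: "x \<in> carrier G \<Longrightarrow> y \<in> carrier G \<Longrightarrow> z \<in> carrier G \<Longrightarrow> x \<otimes> y = x \<otimes> z \<longleftrightarrow> y = z"
  by simp
lemma rcan: "x \<in> carrier G \<Longrightarrow> y \<in> carrier G \<Longrightarrow> z \<in> carrier G \<Longrightarrow> y \<otimes> x = z \<otimes> x \<longleftrightarrow> y = z"
  by simp
end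

context sg begin

lemma d2: "x \<in> carrier G \<Longrightarrow> y \<in> carrier G \<Longrightarrow> x [^] (4::nat) = \<one> \<or> y [^] (4::nat) = \<one>
    \<or> (x \<otimes> y) [^] (4::nat) = \<one> \<or> (x \<otimes> y [^] (2::nat)) [^] (4::nat) = \<one>"
  using D unfolding S4_dbasis_def did2_def by blast
lemma d4: "x \<in> carrier G \<Longrightarrow> y \<in> carrier G \<Longrightarrow> x [^] (6::nat) = \<one> \<or> y [^] (6::nat) = \<one>
    \<or> x = y \<or> x \<otimes> y = \<one> \<or> (x \<otimes> y) [^] (3::nat) = \<one>"
  using D unfolding S4_dbasis_def did4_def by blast
lemma d5: "x1 \<in> carrier G \<Longrightarrow> x2 \<in> carrier G \<Longrightarrow> x3 \<in> carrier G \<Longrightarrow>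
      x1 [^] (3::nat) = \<one> \<or> x2 [^] (3::nat) = \<one> \<or> x3 [^] (3::nat) = \<one>
    \<or> (inv x1 \<otimes> x2) [^] (3::nat) = \<one> \<or> (inv x1 \<otimes> x3) [^] (3::nat) = \<one>
    \<or> (inv x2 \<otimes> x3) [^] (3::nat) = \<one> \<or> theta G x1 x2 x3"
  using D unfolding S4_dbasis_def did5_def by blast

lemma o3_inv: "a \<in> carrier G \<Longrightarrow> a [^] (3::nat) = \<one> \<Longrightarrow> inv a = a \<otimes> a"
  by (metis inv_eq_of m_closed p3 m_assoc)

lemma CA: assumes a: "a \<in> carrier G" "a [^] (3::nat) = \<one>" "a \<noteq> \<one>"
  and g: "g \<in> carrier G" "g \<otimes> a = a \<otimes> g"
  shows "g = \<one> \<or> g = a \<or> g = a \<otimes> a"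
proof (rule ccontr)
  assume ng: "\<not> ?thesis"
  have cm: "a \<otimes> g = g \<otimes> a" using g by simp
  consider "g [^] (3::nat) = \<one>" | "g [^] (4::nat) = \<one>" using d3 g by blast
  then show False
  proof cases
    case 2
    show False
    proof (cases "g \<otimes> g = \<one>")
      case True then show False using L6[OF a g(1) True] ng cm by blast
    next
      case False then show False using L6'[OF a g(1) 2 False cm] by blast
    qed
  next
    case 1
    have a4: "a [^] (4::nat) = a" using powk'[OF a(1) a(2), of 4 1 1] a by simp
    have g4: "g [^] (4::nat) = g" using powk'[OF g(1) 1, of 4 1 1] g by simp
    have g8: "g [^] (8::nat) = g [^] (2::nat)" using powk'[OF g(1) 1, of 8 2 2] by simp
    have ia: "inv a = a \<otimes> a" using o3_inv a by blast
    have e1: "(a \<otimes> g) [^] (4::nat) = a \<otimes> g" using pow_mult_distrib[OF cm a(1) g(1)] a4 g4 by simp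
    have cm2: "a \<otimes> g [^] (2::nat) = g [^] (2::nat) \<otimes> a" using comm_pow[OF a(1) g(1) cm] .
    have e2: "(a \<otimes> g [^] (2::nat)) [^] (4::nat) = a \<otimes> g [^] (2::nat)"
      using pow_mult_distrib[OF cm2 a(1)] a4 g8 g by (simp add: nat_pow_pow)
    have n1: "a \<otimes> g \<noteq> \<one>" using inv_eq_of[OF a(1) g(1)] ia ng by metis
    have n2: "a \<otimes> g [^] (2::nat) \<noteq> \<one>"
    proof
      assume "a \<otimes> g [^] (2::nat) = \<one>"
      then have "g [^] (2::nat) = a \<otimes> a" using inv_eq_of[OF a(1)] ia g by simp
      then have "g [^] (4::nat) = (a \<otimes> a) \<otimes> (a \<otimes> a)" using nat_pow_mult[OF g(1), of 2 2] by simp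
      also have "\<dots> = a [^] (4::nat)" using a by (simp add: numeral_eq_Suc m_assoc)
      finally show False using a4 g4 ng by simp
    qed
    show False using d2[OF a(1) g(1)] a4 g4 e1 e2 n1 n2 a ng by auto
  qed
qed

lemma invol_cyc: "v \<in> carrier G \<Longrightarrow> v \<otimes> v = \<one> \<Longrightarrow> in_cyc G u v \<longleftrightarrow> u = \<one> \<or> u = v"
  unfolding in_cyc_def using p2 p3 by auto

lemma L22: assumes c: "x1 \<in> carrier G" "x2 \<in> carrier G" "x3 \<in> carrier G"
  and i: "x1 \<otimes> x1 = \<one>" "x2 \<otimes> x2 = \<one>" "x3 \<otimes> x3 = \<one>"
  and n: "x1 \<noteq> \<one>" "x2 \<noteq> \<one>" "x3 \<noteq> \<one>"
  and m: "x2 \<otimes> x1 = x1 \<otimes> x2" "x3 \<otimes> x1 = x1 \<otimes> x3" "x3 \<otimes> x2 = x2 \<otimes> x3"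
  and d: "x1 \<noteq> x2" "x3 \<noteq> x1" "x3 \<noteq> x2" "x3 \<noteq> x1 \<otimes> x2"
  shows False
proof -
  have sq: "(x \<otimes> y) \<otimes> (x \<otimes> y) = \<one>" if "x \<in> carrier G" "y \<in> carrier G" "x \<otimes> x = \<one>" "y \<otimes> y = \<one>"
    "y \<otimes> x = x \<otimes> y" for x y
  proof -
    have "(x \<otimes> y) \<otimes> (x \<otimes> y) = x \<otimes> ((y \<otimes> x) \<otimes> y)" using that(1,2) by (simp add: m_assoc)
    also have "\<dots> = x \<otimes> ((x \<otimes> y) \<otimes> y)" using that by simp
    also have "\<dots> = (x \<otimes> x) \<otimes> (y \<otimes> y)" using that(1,2) by (simp add: m_assoc)
    finally show ?thesis using that by simp
  qed
  have s12: "(x1 \<otimes> x2) \<otimes> (x1 \<otimes> x2) = \<one>" using sq c i m by blast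
  have s13: "(x1 \<otimes> x3) \<otimes> (x1 \<otimes> x3) = \<one>" using sq c i m by blast
  have s23: "(x2 \<otimes> x3) \<otimes> (x2 \<otimes> x3) = \<one>" using sq c i m by blast
  have iv: "inv x1 = x1" "inv x2 = x2" using inv_eq_of c i by metis+
  have cube: "v [^] (3::nat) = v" if "v \<in> carrier G" "v \<otimes> v = \<one>" for v
    using that p3 by simp
  have ne: "x1 \<otimes> x2 \<noteq> \<one>" "x1 \<otimes> x3 \<noteq> \<one>" "x2 \<otimes> x3 \<noteq> \<one>"
    using inv_eq_of c iv d by (metis inv_inv)+
  have ne2: "x1 \<noteq> x2 \<otimes> x3" "x2 \<noteq> x1 \<otimes> x3"
  proof -
    show "x1 \<noteq> x2 \<otimes> x3"
    proof
      assume "x1 = x2 \<otimes> x3"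
      then have "x2 \<otimes> x1 = (x2 \<otimes> x2) \<otimes> x3" using c by (simp add: m_assoc)
      then show False using i c d m by simp
    qed
    show "x2 \<noteq> x1 \<otimes> x3"
    proof
      assume "x2 = x1 \<otimes> x3"
      then have "x1 \<otimes> x2 = (x1 \<otimes> x1) \<otimes> x3" using c by (simp add: m_assoc)
      then show False using i c d m by simp
    qed
  qed
  have ne3: "x1 \<otimes> x2 \<noteq> x2 \<otimes> x3" "x1 \<otimes> x2 \<noteq> x1 \<otimes> x3" "x1 \<otimes> x3 \<noteq> x2 \<otimes> x3"
  proof -
    show "x1 \<otimes> x2 \<noteq> x2 \<otimes> x3" using m(1) c d lcan by metis
    show "x1 \<otimes> x2 \<noteq> x1 \<otimes> x3" using c d lcan by metis
    show "x1 \<otimes> x3 \<noteq> x2 \<otimes> x3" using c d rcan by metis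
  qed
  have cyc: "in_cyc G u v \<longleftrightarrow> u = \<one> \<or> u = v" if "v \<in> {x1, x2, x3, x1 \<otimes> x2, x1 \<otimes> x3, x2 \<otimes> x3}" for u v
    using that invol_cyc c i s12 s13 s23 by auto
  have cy: "\<And>u. in_cyc G u x1 \<longleftrightarrow> u = \<one> \<or> u = x1" "\<And>u. in_cyc G u x2 \<longleftrightarrow> u = \<one> \<or> u = x2"
    "\<And>u. in_cyc G u x3 \<longleftrightarrow> u = \<one> \<or> u = x3" "\<And>u. in_cyc G u (x1 \<otimes> x2) \<longleftrightarrow> u = \<one> \<or> u = x1 \<otimes> x2"
    "\<And>u. in_cyc G u (x1 \<otimes> x3) \<longleftrightarrow> u = \<one> \<or> u = x1 \<otimes> x3" "\<And>u. in_cyc G u (x2 \<otimes> x3) \<longleftrightarrow> u = \<one> \<or> u = x2 \<otimes> x3"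
    using cyc by auto
  note nq = n ne ne2 ne3 d
  have th: "\<not> theta G x1 x2 x3"
    unfolding theta_expl by (simp only: m cy nq nq[THEN not_sym] simp_thms)
  have "(inv x1 \<otimes> x2) [^] (3::nat) = x1 \<otimes> x2" using iv cube s12 c by simp
  moreover have "(inv x1 \<otimes> x3) [^] (3::nat) = x1 \<otimes> x3" using iv cube s13 c by simp
  moreover have "(inv x2 \<otimes> x3) [^] (3::nat) = x2 \<otimes> x3" using iv cube s23 c by simp
  moreover have "x1 [^] (3::nat) = x1" "x2 [^] (3::nat) = x2" "x3 [^] (3::nat) = x3" using cube c i by auto
  ultimately show False using d5[OF c] th n ne by auto
qed

end

context sg begin

lemma sub4: assumes H: "subgroup H G" and c: "card H = 8 \<or> card H = 16" and x: "x \<in> H"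
  shows "x [^] (4::nat) = \<one>"
proof -
  have xc: "x \<in> carrier G" using H x subgroup.subset by blast
  have h: "x [^] card H = \<one>" using pow_sub[OF H x] .
  consider "x [^] (3::nat) = \<one>" | "x [^] (4::nat) = \<one>" using d3 xc by blast
  then show ?thesis
  proof cases
    case 1
    have "x [^] gcd 3 (card H) = \<one>" using pow_gcd[OF xc 1 h] .
    then have "x = \<one>" using c xc by (auto simp: gcd_non_0_nat)
    then show ?thesis by simp
  qed
qed

lemma L44: assumes H: "subgroup H G" and c4: "\<forall>x\<in>H. x [^] (4::nat) = \<one>"
  and c: "c \<in> H" "c \<otimes> c \<noteq> \<one>" and d: "d \<in> H" "d \<otimes> d \<noteq> \<one>"
  shows "d = c \<or> d = inv c"
proof -
  have cc: "c \<in> carrier G" "d \<in> carrier G" using subgroup.subset[OF H] c(1) d(1) by blast+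
  have c4': "c [^] (4::nat) = \<one>" "d [^] (4::nat) = \<one>" using c4 c(1) d(1) by blast+
  have "c [^] (6::nat) = c [^] (2::nat)" using powk'[OF cc(1) c4'(1), of 6 1 2] by simp
  then have c6: "c [^] (6::nat) \<noteq> \<one>" using c(2) p2[OF cc(1)] by simp
  have "d [^] (6::nat) = d [^] (2::nat)" using powk'[OF cc(2) c4'(2), of 6 1 2] by simp
  then have d6: "d [^] (6::nat) \<noteq> \<one>" using d(2) p2[OF cc(2)] by simp
  have cdH: "c \<otimes> d \<in> H" using subgroup.m_closed[OF H c(1) d(1)] .
  have cd4: "(c \<otimes> d) [^] (4::nat) = \<one>" using c4 cdH by blast
  have g: "gcd (3::nat) 4 = 1" by (simp add: gcd_non_0_nat)
  have "(c \<otimes> d) [^] (3::nat) = \<one> \<Longrightarrow> c \<otimes> d = \<one>"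
  proof -
    assume "(c \<otimes> d) [^] (3::nat) = \<one>"
    then have "(c \<otimes> d) [^] gcd (3::nat) 4 = \<one>" using pow_gcd[OF m_closed[OF cc] _ cd4] by blast
    then show "c \<otimes> d = \<one>" using g cc by simp
  qed
  then have "c = d \<or> c \<otimes> d = \<one>" using d4[OF cc] c6 d6 by blast
  moreover have "c \<otimes> d = \<one> \<Longrightarrow> d = inv c" using inv_eq_of[OF cc] .
  ultimately show ?thesis by blast
qed

definition Bd :: "'a set \<Rightarrow> 'a set" where "Bd H = insert \<one> {x\<in>H. x \<otimes> x \<noteq> \<one>}"

lemma Bd_props: assumes H: "subgroup H G" and c4: "\<forall>x\<in>H. x [^] (4::nat) = \<one>"
  shows "finite (Bd H)" "card (Bd H) \<le> 3" "Bd H \<subseteq> H"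
    "\<And>x. x \<in> H \<Longrightarrow> x \<notin> Bd H \<Longrightarrow> x \<otimes> x = \<one> \<and> x \<noteq> \<one>"
proof -
  have "\<exists>c. Bd H \<subseteq> {\<one>, c, inv c}"
  proof (cases "{x\<in>H. x \<otimes> x \<noteq> \<one>} = {}")
    case True then show ?thesis by (auto simp: Bd_def)
  next
    case False
    then obtain c where c: "c \<in> H" "c \<otimes> c \<noteq> \<one>" by auto
    then have "Bd H \<subseteq> {\<one>, c, inv c}" using L44[OF H c4 c] by (auto simp: Bd_def)
    then show ?thesis by blast
  qed
  then obtain c where s: "Bd H \<subseteq> {\<one>, c, inv c}" by blast
  show f: "finite (Bd H)" using s finite_subset by blast
  show "card (Bd H) \<le> 3" using card_mono[OF _ s] card3 by (meson finite.emptyI finite_insert le_trans)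
  show "Bd H \<subseteq> H" using H subgroup.one_closed by (auto simp: Bd_def)
  show "\<And>x. x \<in> H \<Longrightarrow> x \<notin> Bd H \<Longrightarrow> x \<otimes> x = \<one> \<and> x \<noteq> \<one>" by (auto simp: Bd_def)
qed

lemma L16: assumes H: "subgroup H G" and c: "card H = 16" shows False
proof -
  have c4: "\<forall>x\<in>H. x [^] (4::nat) = \<one>" using sub4[OF H] c by blast
  note B = Bd_props[OF H c4]
  have fH: "finite H" using c by (metis card.infinite zero_neq_numeral)
  have Hc: "H \<subseteq> carrier G" using H subgroup.subset by blast
  define bad where "bad x = (\<lambda>z. inv x \<otimes> z) ` Bd H" for x
  have fb: "finite (bad x)" "card (bad x) \<le> 3" for x
    using B(1,2) card_image_le[OF B(1), of "\<lambda>z. inv x \<otimes> z"] unfolding bad_def by auto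
  have good: "x \<otimes> y \<otimes> (x \<otimes> y) = \<one> \<and> x \<otimes> y \<noteq> \<one> \<and> x \<otimes> y = y \<otimes> x"
    if "x \<in> H" "x \<notin> Bd H" "y \<in> H" "y \<notin> Bd H" "y \<notin> bad x" for x y
  proof -
    have xc: "x \<in> carrier G" "y \<in> carrier G" using Hc that(1,3) by auto
    have xy: "x \<otimes> y \<in> H" using subgroup.m_closed[OF H that(1,3)] .
    have "x \<otimes> y \<notin> Bd H"
    proof
      assume "x \<otimes> y \<in> Bd H"
      then have "inv x \<otimes> (x \<otimes> y) \<in> bad x" unfolding bad_def by (rule imageI)
      moreover have "inv x \<otimes> (x \<otimes> y) = y" using xc by (simp add: m_assoc[symmetric])
      ultimately show False using that(5) by simp
    qed
    then have 1: "x \<otimes> y \<otimes> (x \<otimes> y) = \<one> \<and> x \<otimes> y \<noteq> \<one>" using B(4)[OF xy] by blast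
    have 2: "x \<otimes> x = \<one>" "y \<otimes> y = \<one>" using B(4)[OF that(1,2)] B(4)[OF that(3,4)] by auto
    have "x \<otimes> y = y \<otimes> x" using comm_of_invol[OF xc 2] 1 by auto
    then show ?thesis using 1 by auto
  qed
  have self: "x \<in> bad x" if "x \<in> H" "x \<notin> Bd H" for x
  proof -
    have xc: "x \<in> carrier G" using Hc that(1) by auto
    have "x \<otimes> x = \<one>" using B(4)[OF that] by auto
    then have "inv x = x" using inv_eq_of[OF xc xc] by simp
    then have "inv x \<otimes> \<one> = x" using xc by simp
    moreover have "\<one> \<in> Bd H" by (simp add: Bd_def)
    ultimately show ?thesis unfolding bad_def by (metis image_eqI)
  qed
  have c1: "card (Bd H) < card H" using B(2) c by linarith
  obtain x1 where x1: "x1 \<in> H" "x1 \<notin> Bd H" using pick[OF B(1) fH c1] by blast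
  have f1: "finite (Bd H \<union> bad x1)" using B(1) fb(1) by blast
  have "card (Bd H \<union> bad x1) \<le> 6" using card_Un_le[of "Bd H" "bad x1"] B(2) fb(2)[of x1] by linarith
  then have c2: "card (Bd H \<union> bad x1) < card H" using c by linarith
  obtain x2 where x2: "x2 \<in> H" "x2 \<notin> Bd H \<union> bad x1" using pick[OF f1 fH c2] by blast
  define U where "U = Bd H \<union> bad x1 \<union> bad x2 \<union> {x1 \<otimes> x2}"
  have f3: "finite U" unfolding U_def using f1 fb(1) by blast
  have "card (Bd H \<union> bad x1 \<union> bad x2) \<le> 9"
    using card_Un_le[of "Bd H \<union> bad x1" "bad x2"] \<open>card (Bd H \<union> bad x1) \<le> 6\<close> fb(2)[of x2] by linarith
  then have "card U \<le> 10" unfolding U_def using card_Un_le[of "Bd H \<union> bad x1 \<union> bad x2" "{x1 \<otimes> x2}"] by simp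
  then have c3: "card U < card H" using c by linarith
  obtain x3 where x3: "x3 \<in> H" "x3 \<notin> U" using pick[OF f3 fH c3] by blast
  have x3': "x3 \<notin> Bd H" "x3 \<notin> bad x1" "x3 \<notin> bad x2" "x3 \<noteq> x1 \<otimes> x2" using x3(2) unfolding U_def by auto
  have x2': "x2 \<notin> Bd H" "x2 \<notin> bad x1" using x2(2) by auto
  have g12: "x2 \<otimes> x1 = x1 \<otimes> x2" using good[OF x1 x2(1) x2'] by simp
  have g13: "x3 \<otimes> x1 = x1 \<otimes> x3" using good[OF x1 x3(1) x3'(1,2)] by simp
  have g23: "x3 \<otimes> x2 = x2 \<otimes> x3" using good[OF x2(1) x2'(1) x3(1) x3'(1,3)] by simp
  have i1: "x1 \<otimes> x1 = \<one>" "x1 \<noteq> \<one>" using B(4)[OF x1] by auto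
  have i2: "x2 \<otimes> x2 = \<one>" "x2 \<noteq> \<one>" using B(4)[OF x2(1) x2'(1)] by auto
  have i3: "x3 \<otimes> x3 = \<one>" "x3 \<noteq> \<one>" using B(4)[OF x3(1) x3'(1)] by auto
  have s1: "x1 \<in> bad x1" using self[OF x1] .
  have s2: "x2 \<in> bad x2" using self[OF x2(1) x2'(1)] .
  have d: "x1 \<noteq> x2" "x3 \<noteq> x1" "x3 \<noteq> x2"
    using s1 s2 x2'(2) x3'(2,3) by auto
  have cs: "x1 \<in> carrier G" "x2 \<in> carrier G" "x3 \<in> carrier G" using Hc x1(1) x2(1) x3(1) by auto
  show False using L22[OF cs i1(1) i2(1) i3(1) i1(2) i2(2) i3(2) g12 g13 g23 d x3'(4)] .
qed

end

context sg begin

lemma L8core: assumes H: "subgroup H G" and c: "card H = 8"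
  and cm: "\<And>x y. x \<in> H \<Longrightarrow> y \<in> H \<Longrightarrow> x \<notin> Bd H \<Longrightarrow> y \<notin> Bd H \<Longrightarrow> x \<otimes> y = y \<otimes> x"
  shows False
proof -
  have c4: "\<forall>x\<in>H. x [^] (4::nat) = \<one>" using sub4[OF H] c by blast
  note B = Bd_props[OF H c4]
  have fH: "finite H" using c by (metis card.infinite zero_neq_numeral)
  have Hc: "H \<subseteq> carrier G" using H subgroup.subset by blast
  have c1: "card (Bd H) < card H" using B(2) c by linarith
  obtain x1 where x1: "x1 \<in> H" "x1 \<notin> Bd H" using pick[OF B(1) fH c1] by blast
  have f1: "finite (Bd H \<union> {x1})" using B(1) by blast
  have "card (Bd H \<union> {x1}) \<le> 4" using card_Un_le[of "Bd H" "{x1}"] B(2) by simp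
  then have c2: "card (Bd H \<union> {x1}) < card H" using c by linarith
  obtain x2 where x2: "x2 \<in> H" "x2 \<notin> Bd H \<union> {x1}" using pick[OF f1 fH c2] by blast
  define U where "U = Bd H \<union> {x1, x2, x1 \<otimes> x2}"
  have f3: "finite U" unfolding U_def using B(1) by blast
  have "card U \<le> 6" unfolding U_def using card_Un_le[of "Bd H" "{x1, x2, x1 \<otimes> x2}"] B(2) card3[of x1 x2 "x1 \<otimes> x2"] by linarith
  then have c3: "card U < card H" using c by linarith
  obtain x3 where x3: "x3 \<in> H" "x3 \<notin> U" using pick[OF f3 fH c3] by blast
  have x3': "x3 \<notin> Bd H" "x3 \<noteq> x1" "x3 \<noteq> x2" "x3 \<noteq> x1 \<otimes> x2" using x3(2) unfolding U_def by auto
  have x2': "x2 \<notin> Bd H" "x1 \<noteq> x2" using x2(2) by auto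
  have g12: "x2 \<otimes> x1 = x1 \<otimes> x2" using cm[OF x2(1) x1(1) x2'(1) x1(2)] .
  have g13: "x3 \<otimes> x1 = x1 \<otimes> x3" using cm[OF x3(1) x1(1) x3'(1) x1(2)] .
  have g23: "x3 \<otimes> x2 = x2 \<otimes> x3" using cm[OF x3(1) x2(1) x3'(1) x2'(1)] .
  have i1: "x1 \<otimes> x1 = \<one>" "x1 \<noteq> \<one>" using B(4)[OF x1] by auto
  have i2: "x2 \<otimes> x2 = \<one>" "x2 \<noteq> \<one>" using B(4)[OF x2(1) x2'(1)] by auto
  have i3: "x3 \<otimes> x3 = \<one>" "x3 \<noteq> \<one>" using B(4)[OF x3(1) x3'(1)] by auto
  have cs: "x1 \<in> carrier G" "x2 \<in> carrier G" "x3 \<in> carrier G" using Hc x1(1) x2(1) x3(1) by auto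
  show False using L22[OF cs i1(1) i2(1) i3(1) i1(2) i2(2) i3(2) g12 g13 g23 x2'(2) x3'(2,3,4)] .
qed

lemma L8: assumes c: "card (carrier G) = 8"
  shows "\<exists>b\<in>carrier G. b \<otimes> b = \<one> \<and> b \<noteq> \<one> \<and> (\<exists>g\<in>carrier G. g \<otimes> b \<noteq> b \<otimes> g)"
proof (rule ccontr)
  assume na: "\<not> ?thesis"
  have c4: "\<forall>x\<in>carrier G. x [^] (4::nat) = \<one>" using sub4[OF subgroup_self] c by blast
  note B = Bd_props[OF subgroup_self c4]
  show False
  proof (rule L8core[OF subgroup_self c])
    fix x y assume h: "x \<in> carrier G" "y \<in> carrier G" "x \<notin> Bd (carrier G)" "y \<notin> Bd (carrier G)"
    have "x \<otimes> x = \<one>" "x \<noteq> \<one>" using B(4)[OF h(1,3)] by auto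
    then have "\<forall>g\<in>carrier G. g \<otimes> x = x \<otimes> g" using na h(1) by blast
    then show "x \<otimes> y = y \<otimes> x" using h(2) by simp
  qed
qed

lemma L8n: assumes H: "subgroup H G" and c: "card H = 8"
  and a: "a \<in> carrier G" "a [^] (3::nat) = \<one>" "a \<noteq> \<one>"
  and nm: "\<And>g x. g \<in> carrier G \<Longrightarrow> x \<in> H \<Longrightarrow> g \<otimes> x \<otimes> inv g \<in> H"
  shows False
proof -
  have c4: "\<forall>x\<in>H. x [^] (4::nat) = \<one>" using sub4[OF H] c by blast
  note B = Bd_props[OF H c4]
  have Hc: "H \<subseteq> carrier G" using H subgroup.subset by blast
  show False
  proof (cases "\<exists>c\<in>H. c \<otimes> c \<noteq> \<one>")
    case True
    then obtain c where cH: "c \<in> H" and cn: "c \<otimes> c \<noteq> \<one>" by blast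
    have cc: "c \<in> carrier G" using Hc cH by auto
    define c' where "c' = a \<otimes> c \<otimes> inv a"
    have c'H: "c' \<in> H" unfolding c'_def using nm[OF a(1) cH] .
    have "c' \<otimes> c' = a \<otimes> (c \<otimes> c) \<otimes> inv a" unfolding c'_def using a(1) cc by (simp add: m_assoc)
    moreover have "c \<otimes> c = inv a \<otimes> (a \<otimes> (c \<otimes> c) \<otimes> inv a) \<otimes> a" using a(1) cc by (simp add: m_assoc)
    ultimately have c'n: "c' \<otimes> c' \<noteq> \<one>" using cn a(1) by auto
    have c44: "c [^] (4::nat) = \<one>" using c4 cH by blast
    consider "c' = c" | "c' = inv c" using L44[OF H c4 cH cn c'H c'n] by blast
    then show False
    proof cases
      case 1
      have "c' \<otimes> a = a \<otimes> c" unfolding c'_def using a(1) cc by (simp add: m_assoc)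
      then have "a \<otimes> c = c \<otimes> a" using 1 by simp
      then show False using L6'[OF a cc c44 cn] by blast
    next
      case 2
      have aa: "a \<otimes> a \<in> carrier G" using a(1) by simp
      have a6: "(a \<otimes> a) [^] (3::nat) = \<one>"
      proof -
        have "(a \<otimes> a) [^] (3::nat) = a [^] (6::nat)" using a(1) p2 nat_pow_pow[OF a(1), of 2 3] by simp
        also have "\<dots> = \<one>" using powk'[OF a(1) a(2), of 6 2 0] by simp
        finally show ?thesis .
      qed
      have an: "a \<otimes> a \<noteq> \<one>"
      proof
        assume "a \<otimes> a = \<one>"
        then have "a [^] (3::nat) = a" using p3 a(1) by simp
        then show False using a by simp
      qed
      have "(a \<otimes> a) \<otimes> c \<otimes> inv (a \<otimes> a) = a \<otimes> c' \<otimes> inv a"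
        unfolding c'_def using a(1) cc by (simp add: m_assoc inv_mult_group)
      also have "\<dots> = a \<otimes> inv c \<otimes> inv a" using 2 by simp
      also have "\<dots> = inv c'" unfolding c'_def using a(1) cc by (simp add: m_assoc inv_mult_group)
      also have "\<dots> = c" using 2 cc by simp
      finally have e: "(a \<otimes> a) \<otimes> c \<otimes> inv (a \<otimes> a) = c" .
      have "(a \<otimes> a) \<otimes> c = c \<otimes> (a \<otimes> a)"
      proof -
        have "(a \<otimes> a) \<otimes> c = ((a \<otimes> a) \<otimes> c \<otimes> inv (a \<otimes> a)) \<otimes> (a \<otimes> a)" using aa cc by (simp add: m_assoc)
        then show ?thesis using e by simp
      qed
      then show False using L6'[OF aa a6 an cc c44 cn] by blast
    qed
  next
    case False
    then have ex: "\<forall>c\<in>H. c \<otimes> c = \<one>" by blast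
    show False
    proof (rule L8core[OF H c])
      fix x y assume h: "x \<in> H" "y \<in> H" "x \<notin> Bd H" "y \<notin> Bd H"
      have xy: "x \<otimes> y \<in> H" using subgroup.m_closed[OF H h(1,2)] .
      have xc: "x \<in> carrier G" "y \<in> carrier G" using Hc h(1,2) by auto
      show "x \<otimes> y = y \<otimes> x" using comm_of_invol[OF xc] ex h(1,2) xy by simp
    qed
  qed
qed

lemma L9: assumes H: "subgroup H G" and c: "card H = 9" shows False
proof -
  have Hc: "H \<subseteq> carrier G" using H subgroup.subset by blast
  have fH: "finite H" using c by (metis card.infinite zero_neq_numeral)
  have c3: "x [^] (3::nat) = \<one>" if x: "x \<in> H" for x
  proof -
    have xc: "x \<in> carrier G" using Hc x by auto
    have h: "x [^] (9::nat) = \<one>" using pow_sub[OF H x] c by simp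
    consider "x [^] (3::nat) = \<one>" | "x [^] (4::nat) = \<one>" using d3 xc by blast
    then show ?thesis
    proof cases
      case 2
      have "x [^] gcd (4::nat) 9 = \<one>" using pow_gcd[OF xc 2 h] .
      then have "x = \<one>" using xc by (simp add: gcd_non_0_nat)
      then show ?thesis by simp
    qed
  qed
  have c4: "x [^] (4::nat) = x" if x: "x \<in> H" for x
    using powk'[OF _ c3[OF x], of 4 1 1] Hc x by auto
  have one: "\<one> \<in> H" using H subgroup.one_closed by blast
  have "card {\<one>} < card H" using c by simp
  then obtain x1 where x1: "x1 \<in> H" "x1 \<notin> {\<one>}" using pick[OF _ fH, of "{\<one>}"] by auto
  have x1c: "x1 \<in> carrier G" using Hc x1 by auto
  have "card {\<one>, x1, x1 \<otimes> x1} < card H" using card3[of \<one> x1 "x1 \<otimes> x1"] c by linarith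
  then obtain x2 where x2: "x2 \<in> H" "x2 \<notin> {\<one>, x1, x1 \<otimes> x1}" using pick[OF _ fH, of "{\<one>, x1, x1 \<otimes> x1}"] by auto
  have x2c: "x2 \<in> carrier G" using Hc x2 by auto
  have ia: "inv x1 = x1 \<otimes> x1" using o3_inv x1c c3[OF x1(1)] by blast
  have e1: "x1 [^] (4::nat) \<noteq> \<one>" using c4[OF x1(1)] x1 by simp
  have e2: "x2 [^] (4::nat) \<noteq> \<one>" using c4[OF x2(1)] x2 by simp
  have h12: "x1 \<otimes> x2 \<in> H" using subgroup.m_closed[OF H x1(1) x2(1)] .
  have e3: "(x1 \<otimes> x2) [^] (4::nat) \<noteq> \<one>"
  proof
    assume "(x1 \<otimes> x2) [^] (4::nat) = \<one>"
    then have "x1 \<otimes> x2 = \<one>" using c4[OF h12] by simp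
    then have "x2 = inv x1" using inv_eq_of[OF x1c x2c] by simp
    then show False using ia x2 by simp
  qed
  have sq: "x2 [^] (2::nat) = x2 \<otimes> x2" using p2 x2c by simp
  have h22: "x1 \<otimes> x2 [^] (2::nat) \<in> H" using sq subgroup.m_closed[OF H x1(1) subgroup.m_closed[OF H x2(1) x2(1)]] by simp
  have e4: "(x1 \<otimes> x2 [^] (2::nat)) [^] (4::nat) \<noteq> \<one>"
  proof
    assume "(x1 \<otimes> x2 [^] (2::nat)) [^] (4::nat) = \<one>"
    then have "x1 \<otimes> (x2 \<otimes> x2) = \<one>" using c4[OF h22] sq by simp
    then have "x2 \<otimes> x2 = x1 \<otimes> x1" using inv_eq_of[OF x1c] x2c ia by simp
    then have "x2 [^] (4::nat) = (x1 \<otimes> x1) \<otimes> (x1 \<otimes> x1)" using nat_pow_mult[OF x2c, of 2 2] sq by simp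
    also have "\<dots> = x1 [^] (4::nat)" using x1c by (simp add: numeral_eq_Suc m_assoc)
    finally have "x2 = x1" using c4[OF x1(1)] c4[OF x2(1)] by simp
    then show False using x2 by simp
  qed
  show False using d2[OF x1c x2c] e1 e2 e3 e4 by blast
qed

lemma Lp: assumes H: "subgroup H G" and c: "card H = p" and p: "p \<ge> 2" "gcd 3 p = 1" "gcd 4 p = 1"
  shows False
proof -
  have Hc: "H \<subseteq> carrier G" using H subgroup.subset by blast
  have fH: "finite H" using c p by (metis card.infinite not_numeral_le_zero)
  have "card {\<one>} < card H" using c p by simp
  then obtain x where x: "x \<in> H" "x \<notin> {\<one>}" using pick[OF _ fH, of "{\<one>}"] by auto
  have xc: "x \<in> carrier G" using Hc x by auto
  have h: "x [^] p = \<one>" using pow_sub[OF H x(1)] c by simp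
  consider "x [^] (3::nat) = \<one>" | "x [^] (4::nat) = \<one>" using d3 xc by blast
  then show False
  proof cases
    case 1 then show False using pow_gcd[OF xc 1 h] p x xc by simp
  next
    case 2 then show False using pow_gcd[OF xc 2 h] p x xc by simp
  qed
qed

end

context group begin

lemma emb: assumes fin: "finite (carrier G)" and K: "subgroup K G" and ordK: "order G \<le> 4 * card K"
  and core: "\<And>k. k \<in> K \<Longrightarrow> (\<forall>g\<in>carrier G. g \<otimes> k \<otimes> inv g \<in> K) \<Longrightarrow> k = \<one>"
  shows "\<exists>h. h \<in> hom G (sym_group 4) \<and> inj_on h (carrier G)"
proof -
  have Kc: "K \<subseteq> carrier G" using K subgroup.subset by blast
  define C where "C = rcosets K"
  define \<phi> where "\<phi> g R = (\<lambda>y. y \<otimes> inv g) ` R" for g R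
  have Cf: "\<exists>x\<in>carrier G. R = K #> x" if "R \<in> C" for R using that unfolding C_def RCOSETS_def by blast
  have pc: "\<phi> g (K #> x) = K #> (x \<otimes> inv g)" if "x \<in> carrier G" "g \<in> carrier G" for x g
    unfolding \<phi>_def r_coset_def using that Kc by (auto simp: m_assoc image_iff subsetD)
  have phiC: "\<phi> g R \<in> C" if "R \<in> C" "g \<in> carrier G" for g R
  proof -
    from Cf[OF that(1)] obtain x where x: "x \<in> carrier G" "R = K #> x" by blast
    have "\<phi> g R = K #> (x \<otimes> inv g)" using pc[OF x(1) that(2)] x(2) by simp
    moreover have "x \<otimes> inv g \<in> carrier G" using x(1) that(2) by simp
    ultimately show ?thesis using rcosetsI[OF Kc] unfolding C_def by simp
  qed
  have pm: "\<phi> (g1 \<otimes> g2) R = \<phi> g1 (\<phi> g2 R)" if "R \<in> C" "g1 \<in> carrier G" "g2 \<in> carrier G" for g1 g2 R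
  proof -
    from Cf[OF that(1)] obtain x where x: "x \<in> carrier G" "R = K #> x" by blast
    have a: "\<phi> g2 R = K #> (x \<otimes> inv g2)" using pc[OF x(1) that(3)] x(2) by simp
    have b: "\<phi> g1 (K #> (x \<otimes> inv g2)) = K #> (x \<otimes> inv g2 \<otimes> inv g1)"
      using pc[of "x \<otimes> inv g2" g1] x(1) that(2,3) by simp
    have c: "\<phi> (g1 \<otimes> g2) R = K #> (x \<otimes> inv (g1 \<otimes> g2))" using pc[of x "g1 \<otimes> g2"] x that(2,3) by simp
    have d: "x \<otimes> inv (g1 \<otimes> g2) = x \<otimes> inv g2 \<otimes> inv g1" using x(1) that(2,3) by (simp add: inv_mult_group m_assoc)
    show ?thesis using a b c d by simp
  qed
  have p1: "\<phi> \<one> R = R" if "R \<in> C" for R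
  proof -
    from Cf[OF that(1)] obtain x where x: "x \<in> carrier G" "R = K #> x" by blast
    have "\<phi> \<one> R = K #> (x \<otimes> inv \<one>)" using pc[of x \<one>] x by simp
    then show ?thesis using x by simp
  qed
  have pbij: "bij_betw (\<phi> g) C C" if g: "g \<in> carrier G" for g
  proof (rule bij_betw_byWitness[where f'="\<phi> (inv g)"])
    show "\<forall>R\<in>C. \<phi> (inv g) (\<phi> g R) = R"
    proof
      fix R assume R: "R \<in> C"
      have "\<phi> (inv g) (\<phi> g R) = \<phi> (inv g \<otimes> g) R" using pm[OF R, of "inv g" g] g by simp
      then show "\<phi> (inv g) (\<phi> g R) = R" using p1[OF R] g by simp
    qed
    show "\<forall>R\<in>C. \<phi> g (\<phi> (inv g) R) = R"
    proof
      fix R assume R: "R \<in> C"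
      have "\<phi> g (\<phi> (inv g) R) = \<phi> (g \<otimes> inv g) R" using pm[OF R, of g "inv g"] g by simp
      then show "\<phi> g (\<phi> (inv g) R) = R" using p1[OF R] g by simp
    qed
    show "\<phi> g ` C \<subseteq> C" using phiC g by blast
    show "\<phi> (inv g) ` C \<subseteq> C" using phiC g by blast
  qed
  have pinj: "g1 = g2" if g: "g1 \<in> carrier G" "g2 \<in> carrier G" and e: "\<forall>R\<in>C. \<phi> g1 R = \<phi> g2 R" for g1 g2
  proof -
    define k where "k = inv g1 \<otimes> g2"
    have kc: "k \<in> carrier G" unfolding k_def using g by simp
    have conj: "x \<otimes> k \<otimes> inv x \<in> K" if x: "x \<in> carrier G" for x
    proof -
      have "K #> x \<in> C" using rcosetsI[OF Kc x] unfolding C_def .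
      then have "K #> (x \<otimes> inv g1) = K #> (x \<otimes> inv g2)" using e pc x g by metis
      moreover have "x \<otimes> inv g1 \<in> K #> (x \<otimes> inv g1)" using rcos_self[OF _ K] x g by simp
      ultimately have "x \<otimes> inv g1 \<in> K #> (x \<otimes> inv g2)" by simp
      then have "(x \<otimes> inv g1) \<otimes> inv (x \<otimes> inv g2) \<in> K"
        using subgroup.rcos_module_imp[OF K is_group] x g by simp
      moreover have "(x \<otimes> inv g1) \<otimes> inv (x \<otimes> inv g2) = x \<otimes> k \<otimes> inv x"
        unfolding k_def using x g by (simp add: inv_mult_group m_assoc)
      ultimately show ?thesis by simp
    qed
    have "k \<in> K" using conj[of \<one>] kc by simp
    then have "k = \<one>" using core conj by blast
    then show ?thesis unfolding k_def using g inv_eq_of[of "inv g1" g2] by simp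
  qed
  have fC: "finite C" unfolding C_def using fin
    by (simp add: RCOSETS_def r_coset_def)
  define m where "m = card C"
  have lag: "card C * card K = order G" unfolding C_def using lagrange[OF K] .
  have cK: "card K > 0" using K fin Kc by (metis card_gt_0_iff finite_subset subgroup.one_closed empty_iff)
  have m4: "m \<le> 4" using lag ordK cK unfolding m_def by (metis mult_le_cancel2 mult.commute)
  obtain \<beta> where \<beta>: "bij_betw \<beta> C {1..m}" using finite_same_card_bij[OF fC, of "{1..m}"] unfolding m_def by auto
  have \<beta>i: "bij_betw (inv_into C \<beta>) {1..m} C" using bij_betw_inv_into[OF \<beta>] .
  have inj\<beta>: "inj_on \<beta> C" using \<beta> bij_betw_def by blast
  define h where "h g = (\<lambda>i. if i \<in> {1..m} then \<beta> (\<phi> g (inv_into C \<beta> i)) else i)" for g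
  have hperm: "h g permutes {1..4}" if g: "g \<in> carrier G" for g
  proof -
    have "bij_betw (\<beta> \<circ> \<phi> g \<circ> inv_into C \<beta>) {1..m} {1..m}"
      using bij_betw_trans[OF bij_betw_trans[OF \<beta>i pbij[OF g]] \<beta>] by (simp add: comp_assoc)
    moreover have "\<And>i. i \<in> {1..m} \<Longrightarrow> (\<beta> \<circ> \<phi> g \<circ> inv_into C \<beta>) i = h g i" unfolding h_def by simp
    ultimately have "bij_betw (h g) {1..m} {1..m}" using bij_betw_cong by blast
    then have "h g permutes {1..m}" by (rule bij_imp_permutes) (auto simp: h_def)
    then show ?thesis by (rule permutes_subset) (use m4 in auto)
  qed
  have hm: "h (g1 \<otimes> g2) = h g1 \<circ> h g2" if g: "g1 \<in> carrier G" "g2 \<in> carrier G" for g1 g2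
  proof
    fix i show "h (g1 \<otimes> g2) i = (h g1 \<circ> h g2) i"
    proof (cases "i \<in> {1..m}")
      case True
      define R where "R = inv_into C \<beta> i"
      have R: "R \<in> C" unfolding R_def using \<beta>i True bij_betwE by blast
      have R2: "\<phi> g2 R \<in> C" using phiC[OF R g(2)] .
      have "h g2 i = \<beta> (\<phi> g2 R)" using True unfolding h_def R_def by simp
      moreover have "\<beta> (\<phi> g2 R) \<in> {1..m}" using \<beta> R2 bij_betwE by blast
      moreover have "inv_into C \<beta> (\<beta> (\<phi> g2 R)) = \<phi> g2 R" using inv_into_f_f[OF inj\<beta> R2] .
      ultimately have "h g1 (h g2 i) = \<beta> (\<phi> g1 (\<phi> g2 R))" unfolding h_def by simp
      moreover have "h (g1 \<otimes> g2) i = \<beta> (\<phi> (g1 \<otimes> g2) R)" using True unfolding h_def R_def by simp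
      ultimately show ?thesis using pm[OF R g] by simp
    next
      case False
      have "h g2 i = i" "h g1 i = i" "h (g1 \<otimes> g2) i = i" by (simp_all only: h_def if_not_P[OF False])
      then show ?thesis by simp
    qed
  qed
  have hinj: "inj_on h (carrier G)"
  proof (rule inj_onI)
    fix g1 g2 assume g: "g1 \<in> carrier G" "g2 \<in> carrier G" and e: "h g1 = h g2"
    have "\<forall>R\<in>C. \<phi> g1 R = \<phi> g2 R"
    proof
      fix R assume R: "R \<in> C"
      have bR: "\<beta> R \<in> {1..m}" using \<beta> R bij_betwE by blast
      have ii: "inv_into C \<beta> (\<beta> R) = R" using inv_into_f_f[OF inj\<beta> R] .
      have "\<beta> (\<phi> g1 R) = \<beta> (\<phi> g2 R)" using fun_cong[OF e, of "\<beta> R"] bR ii unfolding h_def by simp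
      then show "\<phi> g1 R = \<phi> g2 R" using inj\<beta> phiC[OF R g(1)] phiC[OF R g(2)] inj_onD by metis
    qed
    then show "g1 = g2" using pinj g by blast
  qed
  have "h \<in> hom G (sym_group 4)"
    unfolding hom_def using hperm hm by (auto simp: sym_group_carrier sym_group_mult)
  then show ?thesis using hinj by blast
qed

lemma fin_sec: assumes h: "h \<in> hom G (sym_group 4)" and inj: "inj_on h (carrier G)"
  shows "is_section_of G (sym_group 4)"
proof -
  let ?S = "sym_group 4"
  let ?H = "h ` carrier G"
  let ?S' = "?S\<lparr>carrier := ?H\<rparr>"
  interpret S: group ?S by (rule sym_group_is_group)
  have gh: "group_hom G ?S h" unfolding group_hom_def group_hom_axioms_def using h is_group S.is_group by blast
  have sub: "subgroup ?H ?S" using group_hom.img_is_subgroup[OF gh] .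
  interpret S': group ?S' using S.subgroup_imp_group[OF sub] .
  have "h \<in> iso G ?S'"
    unfolding iso_def hom_def using h inj by (auto simp: hom_def bij_betw_def)
  then have i1: "G \<cong> ?S'" by (rule is_isoI)
  have nrm: "{\<one>\<^bsub>?S'\<^esub>} \<lhd> ?S'" using S'.one_is_normal .
  have "the_elem \<in> iso (?S' Mod {\<one>\<^bsub>?S'\<^esub>}) ?S'" using S'.trivial_factor_iso .
  then have "?S' Mod {\<one>\<^bsub>?S'\<^esub>} \<cong> ?S'" by (rule is_isoI)
  moreover have "group (?S' Mod {\<one>\<^bsub>?S'\<^esub>})" using normal.factorgroup_is_group[OF nrm] .
  ultimately have "?S' \<cong> ?S' Mod {\<one>\<^bsub>?S'\<^esub>}" using group.iso_sym by blast
  then have "G \<cong> ?S' Mod {\<one>\<^bsub>?S'\<^esub>}" using i1 iso_trans by blast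
  then show ?thesis unfolding is_section_of_def using sub nrm by blast
qed

end

definition cj :: "('a, 'b) monoid_scheme \<Rightarrow> 'a \<Rightarrow> 'a \<Rightarrow> 'a" where
  "cj G g x = g \<otimes>\<^bsub>G\<^esub> x \<otimes>\<^bsub>G\<^esub> inv\<^bsub>G\<^esub> g"

context group begin

lemma cj_closed [simp]: "g \<in> carrier G \<Longrightarrow> x \<in> carrier G \<Longrightarrow> cj G g x \<in> carrier G"
  by (simp add: cj_def)
lemma cj_mult: "g \<in> carrier G \<Longrightarrow> h \<in> carrier G \<Longrightarrow> x \<in> carrier G \<Longrightarrow> cj G (g \<otimes> h) x = cj G g (cj G h x)"
  by (simp add: cj_def inv_mult_group m_assoc)
lemma cj_one [simp]: "x \<in> carrier G \<Longrightarrow> cj G \<one> x = x"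
  by (simp add: cj_def)
lemma cj_mul: "g \<in> carrier G \<Longrightarrow> x \<in> carrier G \<Longrightarrow> y \<in> carrier G \<Longrightarrow> cj G g (x \<otimes> y) = cj G g x \<otimes> cj G g y"
  by (simp add: cj_def m_assoc)
lemma cj_inv: "g \<in> carrier G \<Longrightarrow> x \<in> carrier G \<Longrightarrow> cj G g (inv x) = inv (cj G g x)"
  by (simp add: cj_def inv_mult_group m_assoc)
lemma cj_back: "g \<in> carrier G \<Longrightarrow> x \<in> carrier G \<Longrightarrow> cj G (inv g) (cj G g x) = x"
  by (simp add: cj_def m_assoc)
lemma cj_eq1: "g \<in> carrier G \<Longrightarrow> x \<in> carrier G \<Longrightarrow> cj G g x = \<one> \<longleftrightarrow> x = \<one>"
  by (metis cj_back cj_closed cj_def inv_closed one_closed r_inv r_one)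
lemma cj_pow: "g \<in> carrier G \<Longrightarrow> x \<in> carrier G \<Longrightarrow> cj G g (x [^] (n::nat)) = (cj G g x) [^] n"
proof (induct n)
  case 0 then show ?case by (simp add: cj_def)
next
  case (Suc n) then show ?case by (simp add: cj_mul)
qed
lemma cj_fix: "g \<in> carrier G \<Longrightarrow> x \<in> carrier G \<Longrightarrow> cj G g x = x \<longleftrightarrow> g \<otimes> x = x \<otimes> g"
proof -
  assume g: "g \<in> carrier G" and x: "x \<in> carrier G"
  have "cj G g x \<otimes> g = g \<otimes> x" using g x by (simp add: cj_def m_assoc)
  then show ?thesis using g x by (metis cj_closed m_closed rcan)
qed

lemma syl: assumes "prime p" "p ^ k dvd order G" "finite (carrier G)"
  shows "\<exists>H. subgroup H G \<and> card H = p ^ k"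
proof -
  have "order G = p ^ k * (order G div p ^ k)" using assms(2) by simp
  then show ?thesis using sylow_thm[OF assms(1) is_group _ assms(3)] by blast
qed

end

context sg begin

lemma fin24: "finite (carrier G) \<and> card (carrier G) \<le> 24"
proof (rule ccontr)
  assume na: "\<not> ?thesis"
  have "\<exists>S. finite S \<and> card S = 25 \<and> S \<subseteq> carrier G"
  proof (cases "finite (carrier G)")
    case True
    then have "25 \<le> card (carrier G)" using na by simp
    then obtain T where "T \<subseteq> carrier G" "card T = 25" "finite T" by (rule obtain_subset_with_card_n)
    then show ?thesis by blast
  next
    case False then show ?thesis using infinite_arbitrarily_large by blast
  qed
  then obtain S where S: "finite S" "card S = 25" "S \<subseteq> carrier G" by blast
  obtain f where f: "bij_betw f {0..<25::nat} S" using ex_bij_betw_nat_finite[OF S(1)] S(2) by auto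
  have "\<forall>i\<le>24. f i \<in> carrier G" using f S(3) bij_betwE by fastforce
  then obtain i j where ij: "i < j" "j \<le> 24" "f i = f j" using D unfolding S4_dbasis_def did1_def by blast
  have "inj_on f {0..<25}" using f bij_betw_def by blast
  moreover have "i \<in> {0..<25}" "j \<in> {0..<25}" using ij by auto
  ultimately have "i = j" using ij(3) inj_onD by metis
  then show False using ij(1) by simp
qed

end

lemma n_cases: "n \<in> {1..24::nat} \<Longrightarrow> \<not> 5 dvd n \<Longrightarrow> \<not> 7 dvd n \<Longrightarrow> \<not> 11 dvd n \<Longrightarrow> \<not> 13 dvd n \<Longrightarrow> \<not> 17 dvd n
  \<Longrightarrow> \<not> 19 dvd n \<Longrightarrow> \<not> 23 dvd n \<Longrightarrow> \<not> 9 dvd n \<Longrightarrow> \<not> 16 dvd n \<Longrightarrow> n \<in> {1,2,3,4,6,8,12,24}"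
proof -
  assume "n \<in> {1..24::nat}"
  then have "n = 1 \<or> n = 2 \<or> n = 3 \<or> n = 4 \<or> n = 5 \<or> n = 6 \<or> n = 7 \<or> n = 8 \<or> n = 9 \<or> n = 10 \<or> n = 11 \<or> n = 12
    \<or> n = 13 \<or> n = 14 \<or> n = 15 \<or> n = 16 \<or> n = 17 \<or> n = 18 \<or> n = 19 \<or> n = 20 \<or> n = 21 \<or> n = 22 \<or> n = 23 \<or> n = 24"
    by (simp only: atLeastAtMost_iff) presburger
  then show "\<not> 5 dvd n \<Longrightarrow> \<not> 7 dvd n \<Longrightarrow> \<not> 11 dvd n \<Longrightarrow> \<not> 13 dvd n \<Longrightarrow> \<not> 17 dvd n
  \<Longrightarrow> \<not> 19 dvd n \<Longrightarrow> \<not> 23 dvd n \<Longrightarrow> \<not> 9 dvd n \<Longrightarrow> \<not> 16 dvd n \<Longrightarrow> n \<in> {1,2,3,4,6,8,12,24}"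
    by (elim disjE; simp)
qed

lemma primes: "prime (2::nat)" "prime (3::nat)" "prime (5::nat)" "prime (7::nat)" "prime (11::nat)" "prime (13::nat)"
  "prime (17::nat)" "prime (19::nat)" "prime (23::nat)"
  by (simp_all add: prime_nat_iff' atLeastLessThan_upt upt_rec)

context sg begin

lemma no_big_prime: assumes p: "prime p" "p \<ge> 5" and d: "p dvd order G" and fc: "finite (carrier G)"
  shows False
proof -
  obtain H where H: "subgroup H G" "card H = p" using syl[OF p(1), of 1] d fc by auto
  have "\<not> p dvd 3" "\<not> p dvd 4" using p(2) by (auto dest: dvd_imp_le)
  then have "coprime p 3" "coprime p 4" using p(1) prime_imp_coprime by blast+
  then have "gcd 3 p = 1" "gcd 4 p = 1" by (simp_all add: coprime_iff_gcd_eq_1 gcd.commute)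
  then show False using Lp[OF H(1,2)] p(2) by simp
qed

lemma orders: "finite (carrier G) \<and> order G \<in> {1,2,3,4,6,8,12,24}"
proof -
  have fc: "finite (carrier G)" and le: "order G \<le> 24" using fin24 unfolding order_def by auto
  have ge: "order G \<ge> 1" using fc unfolding order_def by (metis Suc_leI card_gt_0_iff empty_iff one_closed One_nat_def)
  have np: "\<not> p dvd order G" if "prime p" "p \<ge> 5" for p using no_big_prime[OF that _ fc] by blast
  have n9: "\<not> 9 dvd order G"
  proof
    assume "9 dvd order G"
    then have "3 ^ 2 dvd order G" by simp
    then obtain H where H: "subgroup H G" "card H = 3 ^ 2" using syl[OF primes(2)] fc by blast
    then show False using L9[OF H(1)] by simp
  qed
  have n16: "\<not> 16 dvd order G"
  proof
    assume "16 dvd order G"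
    then have "2 ^ 4 dvd order G" by simp
    then obtain H where H: "subgroup H G" "card H = 2 ^ 4" using syl[OF primes(1)] fc by blast
    then show False using L16[OF H(1)] by simp
  qed
  have "order G \<in> {1..24}" using ge le by simp
  then show ?thesis using n_cases[of "order G"] np primes n9 n16 fc by simp
qed

end

context sg begin

lemma o3_facts: assumes a: "a \<in> carrier G" "a [^] (3::nat) = \<one>" "a \<noteq> \<one>"
  shows "a \<otimes> a \<noteq> \<one>" "a \<noteq> a \<otimes> a" "inv a = a \<otimes> a" "card {\<one>, a, a \<otimes> a} = 3"
proof -
  show n1: "a \<otimes> a \<noteq> \<one>"
  proof
    assume "a \<otimes> a = \<one>"
    then have "a [^] (3::nat) = a" using p3 a(1) by simp
    then show False using a by simp
  qed
  show n2: "a \<noteq> a \<otimes> a" using a(1,3) by (metis l_cancel_one')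
  show "inv a = a \<otimes> a" using o3_inv a by blast
  show "card {\<one>, a, a \<otimes> a} = 3" using n1 n2 a(3) by (simp add: card_insert_if)
qed

lemma orbit_card: assumes a: "a \<in> carrier G" "a [^] (3::nat) = \<one>" "a \<noteq> \<one>"
  shows "card {cj G g a | g. g \<in> carrier G} * 3 = order G"
proof -
  let ?\<phi> = "\<lambda>g. \<lambda>h\<in>carrier G. g \<otimes> h \<otimes> inv g"
  interpret A: group_action G "carrier G" ?\<phi> by (rule action_by_conjugation)
  have o: "orbit G ?\<phi> a = {cj G g a | g. g \<in> carrier G}"
    unfolding orbit_def cj_def using a(1) by simp
  have "stabilizer G ?\<phi> a = {g \<in> carrier G. cj G g a = a}"
    unfolding stabilizer_def cj_def using a(1) by simp
  also have "\<dots> = {\<one>, a, a \<otimes> a}"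
  proof
    show "{g \<in> carrier G. cj G g a = a} \<subseteq> {\<one>, a, a \<otimes> a}"
    proof
      fix g assume g: "g \<in> {g \<in> carrier G. cj G g a = a}"
      then have "g \<otimes> a = a \<otimes> g" using cj_fix[of g a] a(1) by simp
      then show "g \<in> {\<one>, a, a \<otimes> a}" using CA[OF a] g by blast
    qed
    show "{\<one>, a, a \<otimes> a} \<subseteq> {g \<in> carrier G. cj G g a = a}"
      using a(1) cj_fix[of _ a] by (auto simp: m_assoc)
  qed
  finally have "card (stabilizer G ?\<phi> a) = 3" using o3_facts[OF a] by simp
  then show ?thesis using A.orbit_stabilizer_theorem[OF a(1)] o by simp
qed

definition NN :: "'a \<Rightarrow> 'a set" where
  "NN a = {g \<in> carrier G. cj G g a = a \<or> cj G g a = inv a}"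

lemma NN_sub: assumes a: "a \<in> carrier G" shows "subgroup (NN a) G"
proof (rule subgroupI)
  show "NN a \<subseteq> carrier G" unfolding NN_def by blast
  show "NN a \<noteq> {}" using a unfolding NN_def by (metis (mono_tags, lifting) cj_one empty_iff mem_Collect_eq one_closed)
  show "inv g \<in> NN a" if g: "g \<in> NN a" for g
  proof -
    have gc: "g \<in> carrier G" using g unfolding NN_def by blast
    have b: "cj G (inv g) (cj G g a) = a" using cj_back[OF gc a] .
    consider "cj G g a = a" | "cj G g a = inv a" using g unfolding NN_def by blast
    then show ?thesis
    proof cases
      case 1 then show ?thesis using b gc unfolding NN_def by simp
    next
      case 2
      then have "cj G (inv g) (inv a) = a" using b by simp
      then have "inv (cj G (inv g) a) = a" using cj_inv gc a by simp
      then have "cj G (inv g) a = inv a" using gc a by (metis inv_inv cj_closed inv_closed)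
      then show ?thesis using gc unfolding NN_def by simp
    qed
  qed
  show "g \<otimes> h \<in> NN a" if g: "g \<in> NN a" and h: "h \<in> NN a" for g h
  proof -
    have gc: "g \<in> carrier G" "h \<in> carrier G" using g h unfolding NN_def by blast+
    have m: "cj G (g \<otimes> h) a = cj G g (cj G h a)" using cj_mult gc a by blast
    consider "cj G h a = a" | "cj G h a = inv a" using h unfolding NN_def by blast
    then show ?thesis
    proof cases
      case 1 then show ?thesis using g m gc unfolding NN_def by simp
    next
      case 2
      then have "cj G (g \<otimes> h) a = inv (cj G g a)" using m cj_inv gc a by simp
      then show ?thesis using g gc a unfolding NN_def by auto
    qed
  qed
qed

lemma NN_o3: assumes a: "a \<in> carrier G" "a [^] (3::nat) = \<one>" "a \<noteq> \<one>"
  and x: "x \<in> NN a" "x [^] (3::nat) = \<one>" "x \<noteq> \<one>"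
  shows "x = a \<or> x = inv a"
proof -
  have xc: "x \<in> carrier G" using x unfolding NN_def by blast
  note F = o3_facts[OF a]
  consider "cj G x a = a" | "cj G x a = inv a" using x unfolding NN_def by blast
  then show ?thesis
  proof cases
    case 1
    then have "x \<otimes> a = a \<otimes> x" using cj_fix xc a by blast
    then show ?thesis using CA[OF a xc] x(3) F(3) by auto
  next
    case 2
    have "cj G (x \<otimes> x \<otimes> x) a = cj G x (cj G x (cj G x a))" using cj_mult xc a by simp
    also have "\<dots> = inv a" using 2 cj_inv xc a by simp
    finally have "cj G (x \<otimes> x \<otimes> x) a = inv a" .
    moreover have "x \<otimes> x \<otimes> x = \<one>" using x(2) p3 xc by simp
    ultimately have "a = inv a" using a by simp
    then have "a \<otimes> a = \<one>" using a(1) by (metis r_inv)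
    then show ?thesis using F(1) by simp
  qed
qed

lemma NN_core: assumes a: "a \<in> carrier G" "a [^] (3::nat) = \<one>" "a \<noteq> \<one>"
  and big: "order G \<ge> 9"
  and k: "k \<in> NN a" and kc: "\<forall>g\<in>carrier G. g \<otimes> k \<otimes> inv g \<in> NN a"
  shows "k = \<one>"
proof (rule ccontr)
  assume k1: "k \<noteq> \<one>"
  note F = o3_facts[OF a]
  have kcar: "k \<in> carrier G" using k unfolding NN_def by blast
  have kc': "\<forall>g\<in>carrier G. cj G g k \<in> NN a" using kc unfolding cj_def by simp
  have sub: "subgroup (NN a) G" using NN_sub a(1) .
  have X: False if all: "\<forall>g\<in>carrier G. cj G g a \<in> NN a"
  proof -
    have "{cj G g a | g. g \<in> carrier G} \<subseteq> {a, inv a}"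
    proof
      fix z assume "z \<in> {cj G g a | g. g \<in> carrier G}"
      then obtain g where g: "g \<in> carrier G" "z = cj G g a" by blast
      have "z [^] (3::nat) = \<one>" using cj_pow[OF g(1) a(1), of 3] a(2) g by (simp add: cj_def)
      moreover have "z \<noteq> \<one>" using cj_eq1[OF g(1) a(1)] a(3) g by simp
      moreover have "z \<in> NN a" using all g by simp
      ultimately show "z \<in> {a, inv a}" using NN_o3[OF a] by blast
    qed
    moreover have "card {a, inv a} \<le> 2" by (simp add: card_insert_if)
    ultimately have "card {cj G g a | g. g \<in> carrier G} \<le> 2"
      using card_mono[of "{a, inv a}" "{cj G g a | g. g \<in> carrier G}"] by simp
    then show False using orbit_card[OF a] big by linarith
  qed
  consider "cj G k a = a" | "cj G k a = inv a" using k unfolding NN_def by blast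
  then show False
  proof cases
    case 1
    then have "k \<otimes> a = a \<otimes> k" using cj_fix kcar a by blast
    then have "k = a \<or> k = a \<otimes> a" using CA[OF a kcar] k1 by blast
    then show False
    proof
      assume "k = a"
      then have "\<forall>g\<in>carrier G. cj G g a \<in> NN a" using kc' by simp
      then show False using X by blast
    next
      assume ka: "k = a \<otimes> a"
      have "\<forall>g\<in>carrier G. cj G g a \<in> NN a"
      proof
        fix g assume g: "g \<in> carrier G"
        have "cj G g (inv a) \<in> NN a" using kc' g ka F(3) by simp
        then have "inv (cj G g a) \<in> NN a" using cj_inv g a by simp
        then have "inv (inv (cj G g a)) \<in> NN a" using subgroup.m_inv_closed[OF sub] by blast
        then show "cj G g a \<in> NN a" using g a(1) by simp
      qed
      then show False using X by blast
    qed
  next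
    case 2
    have ak: "a = k \<otimes> cj G a (inv k)"
    proof -
      have "k \<otimes> cj G a (inv k) = cj G k a \<otimes> inv a" using kcar a by (simp add: cj_def m_assoc)
      also have "\<dots> = inv a \<otimes> inv a" using 2 by simp
      also have "\<dots> = inv (a \<otimes> a)" using a(1) by (simp add: inv_mult_group)
      also have "\<dots> = a" using F(3) a(1) by (metis inv_inv)
      finally show ?thesis by simp
    qed
    have "\<forall>g\<in>carrier G. cj G g a \<in> NN a"
    proof
      fix g assume g: "g \<in> carrier G"
      have "cj G g a = cj G g k \<otimes> cj G g (cj G a (inv k))" using ak cj_mul g kcar a
        by (metis cj_closed inv_closed)
      also have "cj G g (cj G a (inv k)) = inv (cj G (g \<otimes> a) k)" using cj_mult cj_inv g a kcar by simp
      finally have e: "cj G g a = cj G g k \<otimes> inv (cj G (g \<otimes> a) k)" .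
      have "cj G g k \<in> NN a" using kc' g by blast
      moreover have "g \<otimes> a \<in> carrier G" using g a(1) by simp
      ultimately have i1: "cj G g k \<in> NN a" and i2: "cj G (g \<otimes> a) k \<in> NN a" using kc' by blast+
      have "inv (cj G (g \<otimes> a) k) \<in> NN a" using subgroup.m_inv_closed[OF sub i2] .
      then show "cj G g a \<in> NN a" using e subgroup.m_closed[OF sub i1] by simp
    qed
    then show False using X by blast
  qed
qed

end

context sg begin

lemma elt_sub: assumes H: "subgroup H G" and c: "card H = q" and q: "q \<ge> 2"
  shows "\<exists>x\<in>carrier G. x \<noteq> \<one> \<and> x [^] q = \<one>"
proof -
  have fH: "finite H" using c q by (metis card.infinite not_numeral_le_zero)
  have "card {\<one>} < card H" using c q by simp
  then obtain x where x: "x \<in> H" "x \<notin> {\<one>}" using pick[OF _ fH, of "{\<one>}"] by auto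
  have "x \<in> carrier G" using x(1) H subgroup.subset by blast
  moreover have "x [^] q = \<one>" using pow_sub[OF H x(1)] c by simp
  ultimately show ?thesis using x(2) by blast
qed

lemma Kb_emb: assumes b: "b \<in> carrier G" "b \<otimes> b = \<one>" "b \<noteq> \<one>" and g: "g \<in> carrier G" "g \<otimes> b \<noteq> b \<otimes> g"
  and fc: "finite (carrier G)" and o: "order G \<le> 8"
  shows "\<exists>h. h \<in> hom G (sym_group 4) \<and> inj_on h (carrier G)"
proof -
  have ib: "inv b = b" using inv_eq_of b by metis
  have K: "subgroup {\<one>, b} G"
  proof (rule subgroupI)
    show "{\<one>, b} \<subseteq> carrier G" using b by simp
    show "{\<one>, b} \<noteq> {}" by simp
    show "inv x \<in> {\<one>, b}" if "x \<in> {\<one>, b}" for x using that ib by auto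
    show "x \<otimes> y \<in> {\<one>, b}" if "x \<in> {\<one>, b}" "y \<in> {\<one>, b}" for x y using that b by auto
  qed
  have cK: "card {\<one>, b} = 2" using b(3) by simp
  show ?thesis
  proof (rule emb[OF fc K])
    show "order G \<le> 4 * card {\<one>, b}" using o cK by simp
    fix k assume k: "k \<in> {\<one>, b}" and kc: "\<forall>g\<in>carrier G. g \<otimes> k \<otimes> inv g \<in> {\<one>, b}"
    show "k = \<one>"
    proof (rule ccontr)
      assume "k \<noteq> \<one>"
      then have kb: "k = b" using k by simp
      have "cj G g b \<in> {\<one>, b}" using kc g(1) kb unfolding cj_def by simp
      moreover have "cj G g b \<noteq> \<one>" using cj_eq1[OF g(1) b(1)] b(3) by simp
      ultimately have "cj G g b = b" by simp
      then show False using cj_fix[OF g(1) b(1)] g(2) by simp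
    qed
  qed
qed

lemma y_exists: assumes a: "a \<in> carrier G" "a [^] (3::nat) = \<one>" "a \<noteq> \<one>"
  and fc: "finite (carrier G)" and o: "order G = 24"
  shows "\<exists>y\<in>carrier G. cj G y a = inv a"
proof (rule ccontr)
  assume na: "\<not> ?thesis"
  define Ob where "Ob = {cj G g a | g. g \<in> carrier G}"
  have cOb: "card Ob = 8" using orbit_card[OF a] o unfolding Ob_def by simp
  have Obc: "Ob \<subseteq> carrier G" unfolding Ob_def using a(1) by auto
  have fOb: "finite Ob" using Obc fc finite_subset by blast
  define Ob2 where "Ob2 = (\<lambda>z. inv z) ` Ob"
  have "inj_on (\<lambda>z. inv z) Ob"
  proof (rule inj_onI)
    fix x y assume xy: "x \<in> Ob" "y \<in> Ob" "inv x = inv y"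
    have "x \<in> carrier G" "y \<in> carrier G" using xy(1,2) Obc by auto
    then show "x = y" using xy(3) by (metis inv_inv)
  qed
  then have "card Ob2 = card Ob" unfolding Ob2_def by (rule card_image)
  then have cOb2: "card Ob2 = 8" using cOb by simp
  have Ob2c: "Ob2 \<subseteq> carrier G" unfolding Ob2_def using Obc by auto
  have fOb2: "finite Ob2" unfolding Ob2_def using fOb by simp
  have disj: "Ob \<inter> Ob2 = {}"
  proof (rule ccontr)
    assume "Ob \<inter> Ob2 \<noteq> {}"
    then obtain z where z1: "z \<in> Ob" and z2: "z \<in> Ob2" by blast
    from z1 obtain g where g: "g \<in> carrier G" "z = cj G g a" unfolding Ob_def by blast
    from z2 obtain w where w: "w \<in> Ob" "z = inv w" unfolding Ob2_def by blast
    from w(1) obtain h where h: "h \<in> carrier G" "w = cj G h a" unfolding Ob_def by blast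
    have "z = cj G h (inv a)" using w(2) h cj_inv a(1) by simp
    then have "cj G (inv h) z = inv a" using cj_back h(1) a(1) by simp
    then have "cj G (inv h \<otimes> g) a = inv a" using g cj_mult h(1) a(1) by simp
    moreover have "inv h \<otimes> g \<in> carrier G" using h g by simp
    ultimately show False using na by blast
  qed
  have o3Ob: "z [^] (4::nat) = z \<and> z \<noteq> \<one>" if z: "z \<in> Ob \<union> Ob2" for z
  proof -
    have ia: "inv a \<in> carrier G" "inv a [^] (3::nat) = \<one>" "inv a \<noteq> \<one>"
    proof -
      show "inv a \<in> carrier G" using a(1) by simp
      show "inv a [^] (3::nat) = \<one>" using a(1,2) nat_pow_inv[OF a(1), of 3] by simp
      show "inv a \<noteq> \<one>" using a(1,3) by (metis inv_inv inv_one)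
    qed
    have "\<exists>g\<in>carrier G. \<exists>c. (c = a \<or> c = inv a) \<and> z = cj G g c"
    proof (cases "z \<in> Ob")
      case True
      then obtain g where g: "g \<in> carrier G" "z = cj G g a" unfolding Ob_def by blast
      then show ?thesis by blast
    next
      case False
      then have "z \<in> Ob2" using z by blast
      then obtain w where w: "w \<in> Ob" "z = inv w" unfolding Ob2_def by blast
      then obtain g where g: "g \<in> carrier G" "w = cj G g a" unfolding Ob_def by blast
      have "z = cj G g (inv a)" using w(2) g cj_inv a(1) by simp
      then show ?thesis using g(1) by blast
    qed
    then obtain g c where g: "g \<in> carrier G" and c: "c = a \<or> c = inv a" and zc: "z = cj G g c" by blast
    have cc0: "c \<in> carrier G \<and> c [^] (3::nat) = \<one> \<and> c \<noteq> \<one>"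
      using c
    proof
      assume "c = a" then show ?thesis using a by simp
    next
      assume "c = inv a" then show ?thesis using ia by simp
    qed
    then have cc: "c \<in> carrier G" "c [^] (3::nat) = \<one>" "c \<noteq> \<one>" by auto
    have "z [^] (3::nat) = cj G g (c [^] (3::nat))" using cj_pow[OF g cc(1)] zc by simp
    then have z3: "z [^] (3::nat) = \<one>" using cc(2) g by (simp add: cj_def)
    have zn: "z \<noteq> \<one>" using cj_eq1[OF g cc(1)] cc(3) zc by simp
    have zcar: "z \<in> carrier G" using zc g cc(1) by simp
    have "z [^] (4::nat) = z" using powk'[OF zcar z3, of 4 1 1] zcar by simp
    then show ?thesis using zn by simp
  qed
  have "2 ^ 3 dvd order G" using o by simp
  then obtain P where P: "subgroup P G" "card P = 2 ^ 3" using syl[OF primes(1)] fc by blast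
  have cP: "card P = 8" using P(2) by simp
  have P4: "x [^] (4::nat) = \<one>" if "x \<in> P" for x using sub4[OF P(1)] cP that by blast
  have Pc: "P \<subseteq> carrier G" using P(1) subgroup.subset by blast
  have fP: "finite P" using Pc fc finite_subset by blast
  have dP: "P \<inter> (Ob \<union> Ob2) = {}"
  proof (rule ccontr)
    assume "P \<inter> (Ob \<union> Ob2) \<noteq> {}"
    then obtain z where z: "z \<in> P" "z \<in> Ob \<union> Ob2" by blast
    have "z [^] (4::nat) = \<one>" using P4[OF z(1)] .
    moreover have "z [^] (4::nat) = z" "z \<noteq> \<one>" using o3Ob[OF z(2)] by auto
    ultimately show False by simp
  qed
  have "card (P \<union> (Ob \<union> Ob2)) = 24"
    using card_Un_disjoint[OF fP _ dP] card_Un_disjoint[OF fOb fOb2 disj] fOb fOb2 cP cOb cOb2 by simp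
  moreover have "P \<union> (Ob \<union> Ob2) \<subseteq> carrier G" using Pc Obc Ob2c by blast
  moreover have "card (carrier G) = 24" using o unfolding order_def .
  ultimately have all: "P \<union> (Ob \<union> Ob2) = carrier G" using card_subset_eq[OF fc] by simp
  have nm: "g \<otimes> x \<otimes> inv g \<in> P" if g: "g \<in> carrier G" and x: "x \<in> P" for g x
  proof -
    have xc: "x \<in> carrier G" using Pc x by blast
    have c4: "(cj G g x) [^] (4::nat) = \<one>" using cj_pow[OF g xc, of 4] P4[OF x] g by (simp add: cj_def)
    have "cj G g x \<in> carrier G" using g xc by simp
    then have u: "cj G g x \<in> P \<union> (Ob \<union> Ob2)" using all by simp
    have "cj G g x \<notin> Ob \<union> Ob2"
    proof
      assume "cj G g x \<in> Ob \<union> Ob2"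
      then have "(cj G g x) [^] (4::nat) = cj G g x" "cj G g x \<noteq> \<one>" using o3Ob by auto
      then show False using c4 by simp
    qed
    then have "cj G g x \<in> P" using u by blast
    then show ?thesis unfolding cj_def .
  qed
  show False using L8n[OF P(1) cP a nm] .
qed

lemma NN_card: assumes a: "a \<in> carrier G" "a [^] (3::nat) = \<one>" "a \<noteq> \<one>" and fc: "finite (carrier G)"
  shows "card (NN a) \<ge> 3" "(\<exists>y\<in>carrier G. cj G y a = inv a) \<Longrightarrow> card (NN a) \<ge> 6"
proof -
  note F = o3_facts[OF a]
  have fN: "finite (NN a)" using fc unfolding NN_def by simp
  have sub: "subgroup (NN a) G" using NN_sub a(1) .
  define C where "C = {\<one>, a, a \<otimes> a}"
  have CN: "C \<subseteq> {g \<in> carrier G. cj G g a = a}" unfolding C_def using a(1) cj_fix[of _ a] by (auto simp: m_assoc)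
  then have CN': "C \<subseteq> NN a" unfolding NN_def by blast
  show "card (NN a) \<ge> 3" using card_mono[OF fN CN'] F(4) unfolding C_def by simp
  assume "\<exists>y\<in>carrier G. cj G y a = inv a"
  then obtain y where y: "y \<in> carrier G" "cj G y a = inv a" by blast
  have yN: "y \<in> NN a" unfolding NN_def using y by simp
  define D where "D = (\<lambda>c. y \<otimes> c) ` C"
  have DN: "D \<subseteq> NN a"
  proof
    fix d assume "d \<in> D"
    then obtain c where c: "c \<in> C" "d = y \<otimes> c" unfolding D_def by blast
    have "c \<in> NN a" using CN' c(1) by blast
    then show "d \<in> NN a" using subgroup.m_closed[OF sub yN] c(2) by simp
  qed
  have Cc: "C \<subseteq> carrier G" unfolding C_def using a(1) by simp
  have "inj_on (\<lambda>c. y \<otimes> c) C"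
  proof (rule inj_onI)
    fix u v assume uv: "u \<in> C" "v \<in> C" "y \<otimes> u = y \<otimes> v"
    have "u \<in> carrier G" "v \<in> carrier G" using uv(1,2) Cc by auto
    then show "u = v" using uv(3) y(1) by simp
  qed
  then have "card D = card C" unfolding D_def by (rule card_image)
  then have cD: "card D = 3" using F(4) unfolding C_def by simp
  have disj: "C \<inter> D = {}"
  proof (rule ccontr)
    assume "C \<inter> D \<noteq> {}"
    then obtain c where c: "c \<in> C" "y \<otimes> c \<in> C" unfolding D_def by blast
    have cc: "c \<in> carrier G" using c Cc by blast
    have "cj G (y \<otimes> c) a = cj G y (cj G c a)" using cj_mult y(1) cc a(1) by simp
    also have "cj G c a = a" using CN c(1) by blast
    finally have "cj G (y \<otimes> c) a = inv a" using y by simp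
    moreover have "cj G (y \<otimes> c) a = a" using CN c(2) by blast
    ultimately have "a = inv a" by simp
    then have "a \<otimes> a = \<one>" using a(1) by (metis r_inv)
    then show False using F(1) by simp
  qed
  have fC: "finite C" unfolding C_def by simp
  have fD: "finite D" unfolding D_def using fC by simp
  have cC: "card C = 3" using F(4) unfolding C_def .
  have "card (C \<union> D) = 6" using card_Un_disjoint[OF fC fD disj] cD cC by simp
  moreover have "C \<union> D \<subseteq> NN a" using CN' DN by blast
  ultimately show "card (NN a) \<ge> 6" using card_mono[OF fN, of "C \<union> D"] by simp
qed

lemma embed: "\<exists>h. h \<in> hom G (sym_group 4) \<and> inj_on h (carrier G)"
proof -
  have fc: "finite (carrier G)" and oc: "order G \<in> {1,2,3,4,6,8,12,24}" using orders by auto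
  consider "order G \<le> 4" | "order G = 6" | "order G = 8" | "order G = 12 \<or> order G = 24" using oc by auto
  then show ?thesis
  proof cases
    case 1
    show ?thesis
    proof (rule emb[OF fc triv_subgroup])
      show "order G \<le> 4 * card {\<one>}" using 1 by simp
      show "\<And>k. k \<in> {\<one>} \<Longrightarrow> \<forall>g\<in>carrier G. g \<otimes> k \<otimes> inv g \<in> {\<one>} \<Longrightarrow> k = \<one>" by simp
    qed
  next
    case 2
    have "3 ^ 1 dvd order G" using 2 by simp
    then obtain H3 where H3: "subgroup H3 G" "card H3 = 3 ^ 1" using syl[OF primes(2)] fc by blast
    obtain a where a: "a \<in> carrier G" "a \<noteq> \<one>" "a [^] (3::nat) = \<one>" using elt_sub[OF H3(1)] H3(2) by auto
    have "2 ^ 1 dvd order G" using 2 by simp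
    then obtain H2 where H2: "subgroup H2 G" "card H2 = 2 ^ 1" using syl[OF primes(1)] fc by blast
    obtain b where b: "b \<in> carrier G" "b \<noteq> \<one>" "b [^] (2::nat) = \<one>" using elt_sub[OF H2(1)] H2(2) by auto
    have bb: "b \<otimes> b = \<one>" using b p2 by simp
    have "\<exists>g\<in>carrier G. g \<otimes> b \<noteq> b \<otimes> g"
    proof (rule ccontr)
      assume "\<not> ?thesis"
      then have "a \<otimes> b = b \<otimes> a" using a(1) by blast
      then show False using L6[OF a(1) a(3) a(2) b(1) bb b(2)] by blast
    qed
    then obtain g where g: "g \<in> carrier G" "g \<otimes> b \<noteq> b \<otimes> g" by blast
    show ?thesis using Kb_emb[OF b(1) bb b(2) g fc] 2 by simp
  next
    case 3
    have "card (carrier G) = 8" using 3 unfolding order_def .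
    from L8[OF this] obtain b where b0: "b \<in> carrier G" and bp: "b \<otimes> b = \<one> \<and> b \<noteq> \<one> \<and> (\<exists>g\<in>carrier G. g \<otimes> b \<noteq> b \<otimes> g)"
      by blast
    then obtain g where g: "g \<in> carrier G" "g \<otimes> b \<noteq> b \<otimes> g" by blast
    have b: "b \<in> carrier G" "b \<otimes> b = \<one>" "b \<noteq> \<one>" using b0 bp by auto
    show ?thesis using Kb_emb[OF b g fc] 3 by simp
  next
    case 4
    have "3 ^ 1 dvd order G" using 4 by auto
    then obtain H3 where H3: "subgroup H3 G" "card H3 = 3 ^ 1" using syl[OF primes(2)] fc by blast
    have "\<exists>x\<in>carrier G. x \<noteq> \<one> \<and> x [^] (3::nat) = \<one>" using elt_sub[OF H3(1)] H3(2) by simp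
    then obtain a where a0: "a \<in> carrier G" "a \<noteq> \<one>" "a [^] (3::nat) = \<one>" by blast
    have a: "a \<in> carrier G" "a [^] (3::nat) = \<one>" "a \<noteq> \<one>" using a0 by auto
    have ordK: "order G \<le> 4 * card (NN a)"
    proof (cases "order G = 12")
      case True then show ?thesis using NN_card(1)[OF a fc] by simp
    next
      case False
      then have o24: "order G = 24" using 4 by simp
      show ?thesis using NN_card(2)[OF a fc y_exists[OF a fc o24]] o24 by simp
    qed
    show ?thesis
    proof (rule emb[OF fc NN_sub[OF a(1)] ordK])
      fix k assume k: "k \<in> NN a" "\<forall>g\<in>carrier G. g \<otimes> k \<otimes> inv g \<in> NN a"
      have "order G \<ge> 9" using 4 by auto
      then show "k = \<one>" using NN_core[OF a _ k] by blast
    qed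
  qed
qed

end

theorem proposition4:
  fixes G :: "'a monoid"
  shows "S4_dbasis (sym_group 4)
         \<and> (group G \<and> S4_dbasis G \<longrightarrow> is_section_of G (sym_group 4))"
proof
  show "S4_dbasis (sym_group 4)" by (rule S4_ok)
  show "group G \<and> S4_dbasis G \<longrightarrow> is_section_of G (sym_group 4)"
  proof
    assume h: "group G \<and> S4_dbasis G"
    then interpret sg G by (simp add: sg_def sg_axioms_def)
    obtain f where "f \<in> hom G (sym_group 4)" "inj_on f (carrier G)" using embed by blast
    then show "is_section_of G (sym_group 4)" using fin_sec by blast
  qed
qed


end
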